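(* Let $(V,\mathrm d)$ be the domain complex of a closed Hilbert complex $(W,\mathrm d)$, and let $(V_h,\mathrm d_h)$, $h>0$, be domain complexes of closed Hilbert complexes $(W_h,\mathrm d_h)$, with morphisms $i_h\colon V_h\to V$ extending to bounded maps $W_h\to W$ and morphisms $\pi_h\colon V\to V_h$ (bounded in $V$-norms), both uniformly bounded in $h$, with $\pi_h^k\circ i_h^k=\mathrm{id}_{V_h^k}$. Let $f\in W^k$ and $f_h\in W_h^k$. Suppose $(\sigma_h,u_h,p_h)\in V_h^{k-1}\times V_h^k\times\mathfrak H_h^k$ solves \[\begin{aligned}\langle\sigma_h,\tau_h\rangle_h-\langle u_h,\mathrm d_h\tau_h\rangle_h&=0&&\forall\tau_h\in V_h^{k-1},\\ \langle\mathrm d_h\sigma_h,v_h\rangle_h+\langle\mathrm d_hu_h,\mathrm d_hv_h\rangle_h+\langle p_h,v_h\rangle_h&=\langle f_h,v_h\rangle_h&&\forall v_h\in V_h^k,\\ \langle u_h,q_h\rangle_h&=0&&\forall q_h\in\mathfrak H_h^k,\end{aligned}\] and $(\sigma_h',u_h',p_h')\in V_h^{k-1}\times V_h^k\times\mathfrak H_h'^k$ solves \[\begin{aligned}\langle J_h\sigma_h',\tau_h\rangle_h-\langle J_hu_h',\mathrm d_h\tau_h\rangle_h&=0&&\forall\tau_h\in V_h^{k-1},\\ \langle J_h\mathrm d_h\sigma_h',v_h\rangle_h+\langle J_h\mathrm d_hu_h',\mathrm d_hv_h\rangle_h+\langle J_hp_h',v_h\rangle_h&=\langle i_h^*f,v_h\rangle_h&&\forall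 v_h\in V_h^k,\\ \langle J_hu_h',q_h'\rangle_h&=0&&\forall q_h'\in\mathfrak H_h'^k.\end{aligned}\] Then there is a constant $C$, independent of $h$, $f$ and $f_h$, such that \[\|\sigma_h-\sigma_h'\|_{V_h}+\|u_h-u_h'\|_{V_h}+\|p_h-p_h'\|_h\le C\big(\|f_h-i_h^*f\|_h+\|I-J_h\|\,\|f\|\big).\]
   Context: A Hilbert complex $(W,\mathrm d)$ is a sequence of Hilbert spaces $W^k$ with closed densely defined linear maps $\mathrm d^k\colon V^k\subset W^k\to V^{k+1}\subset W^{k+1}$, $\mathrm d^k\circ\mathrm d^{k-1}=0$; closed if each $\mathrm d^kV^k$ is closed. The domain complex $(V,\mathrm d)$ has the graph inner product $\langle u,v\rangle_V=\langle u,v\rangle+\langle\mathrm du,\mathrm dv\rangle$. Morphisms are sequences of bounded linear maps commuting with differentials. $\langle\cdot,\cdot\rangle,\|\cdot\|$ denote $W$ inner product/norm; $\langle\cdot,\cdot\rangle_h,\|\cdot\|_h$ those of $W_h$. $i_h^*\colon W^k\to W_h^k$ is the Hilbert adjoint of $i_h^k\colon W_h^k\to W^k$, and $J_h=i_h^*i_h\colon W_h^k\to W_h^k$; $\|I-J_h\|$ is its operator norm on $W_h^k$ (in the relevant degree). $\mathfrak Z_h^k=\ker\mathrm d_h^k$, $\mathfrak B_h^k=\mathrm d_hV_h^{k-1}$, $\mathfrak H_h^k=\mathfrak Z_h^k\cap(\mathfrak B_h^k)^\perp$ ($W_h$-orthogonal complement), and the modified harmonic space is $\mathfrak H_h'^k=\{z\in\mathfrak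 Z_h^k:\langle i_hz,i_hb\rangle=0\ \forall b\in\mathfrak B_h^k\}$. *)

theory Defs
  imports "HOL-Analysis.Analysis"
begin

text \<open>Hilbert complexes are modelled with all degrees (indexed by int) living as
closed subspaces W k of one ambient real Hilbert space (type class
real_inner + complete_space); the inner product of W k is the ambient one.
V k is the domain of the closed densely defined operator d k.\<close>

definition lin_on :: "'a::real_vector set \<Rightarrow> ('a \<Rightarrow> 'b::real_vector) \<Rightarrow> bool" where
  "lin_on S f \<longleftrightarrow> (\<forall>x\<in>S. \<forall>y\<in>S. f (x + y) = f x + f y) \<and> (\<forall>c. \<forall>x\<in>S. f (c *\<^sub>R x) = c *\<^sub>R f x)"

definition hilbert_complex ::
  "(int \<Rightarrow> 'a::{real_inner,complete_space} set) \<Rightarrow> (int \<Rightarrow> 'a set) \<Rightarrow> (int \<Rightarrow> 'a \<Rightarrow> 'a) \<Rightarrow> bool" where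
  "hilbert_complex W V d \<longleftrightarrow> (\<forall>k.
     subspace (W k) \<and> closed (W k) \<and>
     subspace (V k) \<and> V k \<subseteq> W k \<and> W k \<subseteq> closure (V k) \<and>
     lin_on (V k) (d k) \<and>
     d k ` V k \<subseteq> V (k + 1) \<and>
     closed ((\<lambda>x. (x, d k x)) ` V k) \<and>
     (\<forall>x\<in>V k. d (k + 1) (d k x) = 0))"

definition closed_hilbert_complex ::
  "(int \<Rightarrow> 'a::{real_inner,complete_space} set) \<Rightarrow> (int \<Rightarrow> 'a set) \<Rightarrow> (int \<Rightarrow> 'a \<Rightarrow> 'a) \<Rightarrow> bool" where
  "closed_hilbert_complex W V d \<longleftrightarrow> hilbert_complex W V d \<and> (\<forall>k. closed (d k ` V k))"

definition vnorm :: "(int \<Rightarrow> 'a::real_normed_vector \<Rightarrow> 'a) \<Rightarrow> int \<Rightarrow> 'a \<Rightarrow> real" where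
  "vnorm d k x = sqrt ((norm x)\<^sup>2 + (norm (d k x))\<^sup>2)"

definition hadj :: "'v::real_inner set \<Rightarrow> ('v \<Rightarrow> 'w::real_inner) \<Rightarrow> 'w \<Rightarrow> 'v" where
  "hadj T g w = (THE y. y \<in> T \<and> (\<forall>x\<in>T. inner y x = inner w (g x)))"

definition Jop :: "(int \<Rightarrow> 'v::real_inner set) \<Rightarrow> (int \<Rightarrow> 'v \<Rightarrow> 'w::real_inner) \<Rightarrow> int \<Rightarrow> 'v \<Rightarrow> 'v" where
  "Jop Wh i j x = hadj (Wh j) (i j) (i j x)"

definition opnorm_on :: "'a::real_normed_vector set \<Rightarrow> ('a \<Rightarrow> 'b::real_normed_vector) \<Rightarrow> real" where
  "opnorm_on S f = (SUP x\<in>{x\<in>S. norm x \<le> 1}. norm (f x))"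

definition harmonic_sp :: "(int \<Rightarrow> 'a::real_inner set) \<Rightarrow> (int \<Rightarrow> 'a \<Rightarrow> 'a) \<Rightarrow> int \<Rightarrow> 'a set" where
  "harmonic_sp V d k = {z\<in>V k. d k z = 0 \<and> (\<forall>b\<in>d (k - 1) ` V (k - 1). inner z b = 0)}"

definition harmonic_sp' :: "(int \<Rightarrow> 'v::real_inner set) \<Rightarrow> (int \<Rightarrow> 'v \<Rightarrow> 'v) \<Rightarrow> (int \<Rightarrow> 'v \<Rightarrow> 'w::real_inner) \<Rightarrow> int \<Rightarrow> 'v set" where
  "harmonic_sp' V d i k = {z\<in>V k. d k z = 0 \<and> (\<forall>b\<in>d (k - 1) ` V (k - 1). inner (i k z) (i k b) = 0)}"

end

theory Submission
  imports Defs
begin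

lemma parallelogram:
  fixes a b :: "'a::real_inner"
  shows "norm (a - b)^2 = 2 * norm a ^2 + 2 * norm b ^2 - 4 * norm ((1/2) *\<^sub>R (a + b))^2"
  by (simp add: power2_norm_eq_inner inner_diff_left inner_diff_right inner_add_left inner_add_right inner_commute algebra_simps)

lemma norm_diff_scale_sq:
  fixes v t :: "'a::real_inner"
  shows "norm (v - T *\<^sub>R t)^2 = norm v^2 - 2 * T * inner v t + T^2 * norm t^2"
proof -
  have "norm (v - T *\<^sub>R t)^2 = inner (v - T *\<^sub>R t) (v - T *\<^sub>R t)" by (rule power2_norm_eq_inner)
  also have "\<dots> = inner v v - 2 * T * inner v t + T^2 * inner t t"
    by (simp add: inner_diff_left inner_diff_right inner_commute power2_eq_square algebra_simps)
  finally show ?thesis by (simp add: power2_norm_eq_inner)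
qed

lemma proj_exists:
  fixes S :: "'a::{real_inner,complete_space} set"
  assumes sub: "subspace S" and cl: "closed S"
  shows "\<exists>y\<in>S. \<forall>s\<in>S. inner (x - y) s = 0"
proof -
  have ne: "S \<noteq> {}" using subspace_0[OF sub] by auto
  define D where "D = infdist x S"
  have D0: "0 \<le> D" unfolding D_def by (rule infdist_nonneg)
  have Dle: "D \<le> norm (x - s)" if "s \<in> S" for s
    unfolding D_def using infdist_le[OF that, of x] by (simp add: dist_norm)
  have "\<exists>s\<in>S. norm (x - s) < D + 1/(Suc n)" for n
  proof -
    have "infdist x S < D + 1/Suc n" unfolding D_def by simp
    then have "(INF a\<in>S. dist x a) < D + 1/Suc n" using infdist_notempty[OF ne] by simp
    then obtain s where "s \<in> S" "dist x s < D + 1/Suc n"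
      using cINF_less_iff[of S "\<lambda>a. dist x a"] ne by (auto intro: bdd_belowI2[where m=0])
    then show ?thesis by (auto simp: dist_norm)
  qed
  then obtain s where sS: "\<And>n. s n \<in> S" and sn: "\<And>n. norm (x - s n) < D + 1/Suc n"
    by metis
  have key: "norm (s n - s m)^2 \<le> 2 * (D + 1/Suc n)^2 + 2 * (D + 1/Suc m)^2 - 4 * D^2" for n m
  proof -
    have mid: "(1/2) *\<^sub>R ((x - s n) + (x - s m)) = x - (1/2) *\<^sub>R (s n + s m)"
      by (simp add: algebra_simps flip: scaleR_add_left)
    have midS: "(1/2) *\<^sub>R (s n + s m) \<in> S"
      using sS sub by (simp add: subspace_add subspace_scale)
    have "D \<le> norm ((1/2) *\<^sub>R ((x - s n) + (x - s m)))"
      using Dle[OF midS] mid by simp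
    then have a: "D^2 \<le> norm ((1/2) *\<^sub>R ((x - s n) + (x - s m)))^2"
      using D0 power_mono by blast
    have b: "norm (x - s n)^2 \<le> (D + 1/Suc n)^2"
      using sn[of n] by (intro power_mono) auto
    have c: "norm (x - s m)^2 \<le> (D + 1/Suc m)^2"
      using sn[of m] by (intro power_mono) auto
    have "s n - s m = (x - s m) - (x - s n)" by simp
    then have "norm (s n - s m)^2 = 2 * norm (x - s m)^2 + 2 * norm (x - s n)^2
         - 4 * norm ((1/2) *\<^sub>R ((x - s n) + (x - s m)))^2"
      using parallelogram[of "x - s m" "x - s n"] by (simp add: add.commute)
    with a b c show ?thesis by linarith
  qed
  have "Cauchy s"
  proof (rule CauchyI)
    fix e :: real assume e: "e > 0"
    define E where "E = e^2 / (8 * D + 8)"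
    have E0: "E > 0" unfolding E_def using e D0 by auto
    obtain N where N: "1 / Suc N < E" and "E \<le> 1 \<or> True"
      using reals_Archimedean[OF E0] by (metis inverse_eq_divide of_nat_Suc add.commute)
    show "\<exists>M. \<forall>m\<ge>M. \<forall>n\<ge>M. norm (s m - s n) < e"
    proof (intro exI allI impI)
      fix m n assume m: "m \<ge> N" and n: "n \<ge> N"
      have em: "1/Suc m \<le> 1/Suc N" using m by (simp add: frac_le)
      have en: "1/Suc n \<le> 1/Suc N" using n by (simp add: frac_le)
      have E1: "E \<le> e^2/8" unfolding E_def using D0 e
        by (intro divide_left_mono) auto
      define a where "a = 1 / real (Suc m)"
      define b where "b = 1 / real (Suc n)"
      have a0: "0 \<le> a" "a \<le> 1" "a < E" unfolding a_def using em N by auto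
      have b0: "0 \<le> b" "b \<le> 1" "b < E" unfolding b_def using en N by auto
      have aa: "a*a \<le> E" using a0 by (smt (verit) mult_left_le)
      have bb: "b*b \<le> E" using b0 by (smt (verit) mult_left_le)
      have h1: "norm (s m - s n)^2 \<le> 2 * (D + a)^2 + 2 * (D + b)^2 - 4 * D^2"
        using key[of m n] unfolding a_def b_def by simp
      have h2: "2 * (D + a)^2 + 2 * (D + b)^2 - 4 * D^2 = 4*D*a + 2*(a*a) + 4*D*b + 2*(b*b)"
        by (simp add: power2_eq_square algebra_simps)
      have h3: "D*a \<le> D*E" "D*b \<le> D*E" using a0 b0 D0 by (auto intro: mult_left_mono)
      have h4: "(8*D + 4) * E < e^2"
      proof -
        have "(8*D+4)*E < (8*D+8)*E" using E0 by (intro mult_strict_right_mono) auto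
        also have "\<dots> = e^2" unfolding E_def using D0 by auto
        finally show ?thesis .
      qed
      have "norm (s m - s n)^2 < e^2"
        using h1 h2 h3 h4 aa bb by (simp add: algebra_simps)
      then show "norm (s m - s n) < e" using e using power2_less_imp_less[of "norm (s m - s n)" e] by auto
    qed
  qed
  then obtain y where ly: "s \<longlonglongrightarrow> y" using convergent_eq_Cauchy by blast
  have yS: "y \<in> S" using closed_sequentially[OF cl] sS ly by blast
  have "(\<lambda>n. norm (x - s n)) \<longlonglongrightarrow> norm (x - y)"
    by (intro tendsto_intros ly)
  moreover have "(\<lambda>n. D + 1/Suc n) \<longlonglongrightarrow> D + 0"
    by (intro tendsto_intros LIMSEQ_inverse_real_of_nat[unfolded inverse_eq_divide])
  ultimately have "norm (x - y) \<le> D"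
    using sn by (intro LIMSEQ_le) (auto intro: less_imp_le)
  then have ymin: "norm (x - y) \<le> norm (x - s)" if "s \<in> S" for s
    using Dle[OF that] by linarith
  show ?thesis
  proof (intro bexI[OF _ yS] ballI)
    fix t assume tS: "t \<in> S"
    define g where "g = inner (x - y) t"
    define T where "T = g / (norm t ^2 + 1)"
    have "y + T *\<^sub>R t \<in> S" using yS tS sub by (simp add: subspace_add subspace_scale)
    then have "norm (x - y)^2 \<le> norm ((x - y) - T *\<^sub>R t)^2"
      using ymin by (metis diff_diff_eq norm_ge_zero power_mono)
    also have "\<dots> = norm (x - y)^2 - 2 * T * g + T^2 * norm t^2"
      unfolding g_def by (rule norm_diff_scale_sq)
    finally have "2 * T * g \<le> T^2 * norm t ^2" by simp
    define N where "N = norm t ^2 + 1"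
    have N0: "N > 0" unfolding N_def by (smt (verit) zero_le_power2)
    have TN: "T * N = g" unfolding T_def N_def using N0 N_def by simp
    have "2 * T * g * (N*N) \<le> T^2 * norm t ^2 * (N*N)"
      using \<open>2 * T * g \<le> T^2 * norm t ^2\<close> N0 by (intro mult_right_mono) auto
    then have "2 * g * g * N \<le> g * g * norm t^2" using TN
      by (simp add: power2_eq_square algebra_simps) (metis mult.assoc mult.left_commute)
    then have "g * g * (2 * N - norm t^2) \<le> 0" by (simp add: algebra_simps)
    moreover have "2 * N - norm t^2 > 0" unfolding N_def by (smt (verit) zero_le_power2)
    ultimately have "g * g \<le> 0" by (simp add: mult_le_0_iff)
    then show "inner (x - y) t = 0" unfolding g_def[symmetric] using not_square_less_zero by (metis mult_eq_0_iff order_antisym_conv zero_le_square)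
  qed
qed

lemma lin_on_0: assumes "subspace S" "lin_on S f" shows "f 0 = 0"
proof -
  have "f (0 *\<^sub>R 0) = 0 *\<^sub>R f 0" using assms subspace_0 unfolding lin_on_def by blast
  then show ?thesis by simp
qed

lemma lin_on_diff: assumes "subspace S" "lin_on S f" "x \<in> S" "y \<in> S" shows "f (x - y) = f x - f y"
proof -
  have my: "(-1) *\<^sub>R y \<in> S" using assms subspace_scale by blast
  have "f (x + (-1) *\<^sub>R y) = f x + f ((-1) *\<^sub>R y)" using assms my unfolding lin_on_def by blast
  also have "f ((-1) *\<^sub>R y) = (-1) *\<^sub>R f y" using assms unfolding lin_on_def by blast
  finally show ?thesis by simp
qed

lemma lin_on_add: assumes "lin_on S f" "x \<in> S" "y \<in> S" shows "f (x + y) = f x + f y"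
  using assms unfolding lin_on_def by blast

lemma lin_on_scale: assumes "lin_on S f" "x \<in> S" shows "f (c *\<^sub>R x) = c *\<^sub>R f x"
  using assms unfolding lin_on_def by blast

lemma lin_bdd_cont:
  fixes g :: "'a::real_normed_vector \<Rightarrow> 'b::real_normed_vector"
  assumes "subspace T" "lin_on T g" "\<forall>x\<in>T. norm (g x) \<le> K * norm x"
  shows "continuous_on T g"
proof (rule lipschitz_on_continuous_on[of "\<bar>K\<bar>"], rule lipschitz_onI)
  fix x y assume "x \<in> T" "y \<in> T"
  then have "x - y \<in> T" using assms(1) subspace_diff by blast
  then have "norm (g (x - y)) \<le> K * norm (x - y)" using assms by blast
  also have "\<dots> \<le> \<bar>K\<bar> * norm (x - y)" by (intro mult_right_mono) auto
  finally show "dist (g x) (g y) \<le> \<bar>K\<bar> * dist x y"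
    using lin_on_diff[OF assms(1,2) \<open>x\<in>T\<close> \<open>y\<in>T\<close>] by (simp add: dist_norm)
qed auto

lemma riesz_exists:
  fixes T :: "'v::{real_inner,complete_space} set" and g :: "'v \<Rightarrow> 'w::real_inner"
  assumes sub: "subspace T" and cl: "closed T" and lin: "lin_on T g"
    and bdd: "\<forall>x\<in>T. norm (g x) \<le> K * norm x"
  shows "\<exists>y\<in>T. \<forall>x\<in>T. inner y x = inner w (g x)"
proof -
  define \<phi> where "\<phi> x = inner w (g x)" for x
  have \<phi>lin: "\<phi> (a + b) = \<phi> a + \<phi> b" "\<phi> (c *\<^sub>R a) = c * \<phi> a" if "a \<in> T" "b \<in> T" for a b c
    using lin that unfolding lin_on_def \<phi>_def by (auto simp: inner_add_right)
  have \<phi>diff: "\<phi> (a - b) = \<phi> a - \<phi> b" if "a \<in> T" "b \<in> T" for a b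
    using lin_on_diff[OF sub lin that] unfolding \<phi>_def by (simp add: inner_diff_right)
  show ?thesis
  proof (cases "\<forall>x\<in>T. \<phi> x = 0")
    case True
    then show ?thesis using subspace_0[OF sub] unfolding \<phi>_def by (intro bexI[of _ 0]) auto
  next
    case False
    then obtain x0 where x0: "x0 \<in> T" "\<phi> x0 \<noteq> 0" by blast
    define N where "N = T \<inter> \<phi> -` {0}"
    have contg: "continuous_on T g" by (rule lin_bdd_cont[OF sub lin bdd])
    have contphi: "continuous_on T \<phi>" unfolding \<phi>_def
      by (intro continuous_on_inner continuous_on_const contg)
    have clN: "closed N" unfolding N_def by (rule continuous_closed_preimage[OF contphi cl]) auto
    have subN: "subspace N" unfolding subspace_def
    proof (intro conjI ballI allI)
      show "0 \<in> N" unfolding N_def \<phi>_def using subspace_0[OF sub] lin_on_0[OF sub lin] by simp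
      fix c x y assume "x \<in> N" "y \<in> N"
      then have xy: "x \<in> T" "y \<in> T" "\<phi> x = 0" "\<phi> y = 0" unfolding N_def by auto
      show "x + y \<in> N" unfolding N_def using xy \<phi>lin(1)[OF xy(1,2)] sub by (simp add: subspace_add)
      show "c *\<^sub>R x \<in> N" unfolding N_def using xy \<phi>lin(2)[OF xy(1,2)] sub by (simp add: subspace_scale)
    qed
    obtain n0 where n0: "n0 \<in> N" "\<forall>n\<in>N. inner (x0 - n0) n = 0"
      using proj_exists[OF subN clN] by blast
    define z where "z = x0 - n0"
    have zT: "z \<in> T" using n0 x0 sub unfolding z_def N_def by (auto intro: subspace_diff)
    have phiz: "\<phi> z = \<phi> x0" using \<phi>diff[OF x0(1), of n0] n0 unfolding z_def N_def by auto
    have zperp: "\<forall>n\<in>N. inner z n = 0" using n0 unfolding z_def by auto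
    have z0: "inner z z \<noteq> 0"
    proof
      assume "inner z z = 0"
      then have "z = 0" by simp
      then have "\<phi> z = 0" unfolding \<phi>_def using lin_on_0[OF sub lin] by simp
      then show False using phiz x0 by simp
    qed
    define y where "y = (\<phi> z / inner z z) *\<^sub>R z"
    show ?thesis
    proof (intro bexI[of _ y] ballI)
      show "y \<in> T" unfolding y_def using zT sub by (simp add: subspace_scale)
      fix x assume xT: "x \<in> T"
      define m where "m = x - (\<phi> x / \<phi> z) *\<^sub>R z"
      have sT: "(\<phi> x / \<phi> z) *\<^sub>R z \<in> T" using zT sub by (simp add: subspace_scale)
      have "\<phi> m = \<phi> x - (\<phi> x / \<phi> z) * \<phi> z" unfolding m_def
        using \<phi>diff[OF xT sT] \<phi>lin(2)[OF zT zT] by simp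
      then have "\<phi> m = 0" using phiz x0 by simp
      moreover have "m \<in> T" unfolding m_def using xT sT sub by (simp add: subspace_diff)
      ultimately have "m \<in> N" unfolding N_def by simp
      then have "inner z m = 0" using zperp by blast
      then have "inner z x = (\<phi> x / \<phi> z) * inner z z" unfolding m_def by (simp add: inner_diff_right)
      then have "(\<phi> z / inner z z) * inner z x = \<phi> x" using z0 phiz x0 by simp
      then show "inner y x = inner w (g x)" unfolding y_def \<phi>_def[symmetric] by simp
    qed
  qed
qed

lemma hadj_props:
  fixes T :: "'v::{real_inner,complete_space} set" and g :: "'v \<Rightarrow> 'w::real_inner"
  assumes sub: "subspace T" and cl: "closed T" and lin: "lin_on T g"
    and bdd: "\<forall>x\<in>T. norm (g x) \<le> K * norm x"
  shows "hadj T g w \<in> T" "\<And>x. x \<in> T \<Longrightarrow> inner (hadj T g w) x = inner w (g x)"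
proof -
  obtain y where y: "y \<in> T" "\<forall>x\<in>T. inner y x = inner w (g x)" using riesz_exists[OF assms] by blast
  have uniq: "y' = y" if "y' \<in> T" "\<forall>x\<in>T. inner y' x = inner w (g x)" for y'
  proof -
    have "y' - y \<in> T" using that y sub subspace_diff by blast
    then have "inner y' (y' - y) = inner y (y' - y)" using that(2) y(2) by metis
    then have "inner (y' - y) (y' - y) = 0" by (simp only: inner_diff_left)
    then show ?thesis by (simp only: inner_eq_zero_iff right_minus_eq)
  qed
  have "hadj T g w = y" unfolding hadj_def
  proof (rule the_equality)
    show "y \<in> T \<and> (\<forall>x\<in>T. inner y x = inner w (g x))" using y by blast
    fix y' assume "y' \<in> T \<and> (\<forall>x\<in>T. inner y' x = inner w (g x))"
    then show "y' = y" using uniq by blast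
  qed
  then show "hadj T g w \<in> T" "\<And>x. x \<in> T \<Longrightarrow> inner (hadj T g w) x = inner w (g x)" using y by auto
qed

lemma lin_image_subspace:
  assumes "subspace S" "lin_on S f" shows "subspace (f ` S)"
  unfolding subspace_def
proof (intro conjI ballI allI)
  show "0 \<in> f ` S" using lin_on_0[OF assms] subspace_0[OF assms(1)] by (metis image_eqI)
  fix c x y assume "x \<in> f ` S" "y \<in> f ` S"
  then obtain a b where ab: "a \<in> S" "b \<in> S" "x = f a" "y = f b" by auto
  show "x + y \<in> f ` S" using ab lin_on_add[OF assms(2) ab(1,2)] assms(1)
    by (metis image_eqI subspace_add)
  show "c *\<^sub>R x \<in> f ` S" using ab lin_on_scale[OF assms(2) ab(1)] assms(1)
    by (metis image_eqI subspace_scale)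
qed

lemma baire_step:
  fixes Vs :: "'a::{real_inner,complete_space} set" and D :: "'a \<Rightarrow> 'a"
  assumes sub: "subspace Vs" and lin: "lin_on Vs D" and clB: "closed (D ` Vs)"
  shows "\<exists>n::nat. \<exists>b0 e. e > 0 \<and> b0 \<in> D ` Vs \<and> (\<forall>b\<in>D ` Vs. dist b b0 < e \<longrightarrow> b \<in> closure (D ` {x\<in>Vs. norm x \<le> real n}))"
proof (rule ccontr)
  define B where "B = D ` Vs"
  define A where "A n = closure (D ` {x\<in>Vs. norm x \<le> real n})" for n :: nat
  define X where "X = top_of_set B"
  assume contra: "\<not> ?thesis"
  have AB: "A n \<subseteq> B" for n
  proof -
    have "A n \<subseteq> closure B" unfolding A_def B_def by (rule closure_mono) blast
    then show ?thesis using closure_closed[OF clB] unfolding B_def by simp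
  qed
  have UA: "\<Union> (range A) = B"
  proof
    show "\<Union> (range A) \<subseteq> B" using AB by (simp add: UN_least)
    show "B \<subseteq> \<Union> (range A)"
    proof
      fix b assume "b \<in> B"
      then obtain x where x: "x \<in> Vs" "b = D x" unfolding B_def by (rule imageE) simp
      obtain n :: nat where "norm x \<le> real n" using real_arch_simple by blast
      then have "b \<in> D ` {x\<in>Vs. norm x \<le> real n}" using x by blast
      then have "b \<in> A n" unfolding A_def by (rule closure_subset[THEN subsetD])
      then show "b \<in> \<Union> (range A)" by blast
    qed
  qed
  have cm: "completely_metrizable_space X" unfolding X_def
    by (rule completely_metrizable_space_closedin[OF completely_metrizable_space_euclidean])
      (use clB in \<open>unfold B_def closed_closedin\<close>)
  have int0: "X interior_of A n = {}" for n
  proof (rule ccontr)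
    assume "X interior_of A n \<noteq> {}"
    then obtain b0 where "b0 \<in> X interior_of A n" by blast
    then obtain U where U: "openin X U" "b0 \<in> U" "U \<subseteq> A n" unfolding interior_of_def by blast
    then obtain e where e: "e > 0" "\<forall>x'\<in>B. dist x' b0 < e \<longrightarrow> x' \<in> U"
      unfolding X_def openin_euclidean_subtopology_iff by blast
    have "\<forall>b\<in>D ` Vs. dist b b0 < e \<longrightarrow> b \<in> closure (D ` {x\<in>Vs. norm x \<le> real n})"
    proof (intro ballI impI)
      fix b assume "b \<in> D ` Vs" "dist b b0 < e"
      then have "b \<in> U" using e(2) unfolding B_def by blast
      then show "b \<in> closure (D ` {x\<in>Vs. norm x \<le> real n})" using U(3) unfolding A_def by blast
    qed
    moreover have "b0 \<in> D ` Vs" using U(2,3) AB unfolding B_def by blast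
    ultimately have "\<exists>n::nat. \<exists>b0 e. e > 0 \<and> b0 \<in> D ` Vs \<and> (\<forall>b\<in>D ` Vs. dist b b0 < e \<longrightarrow> b \<in> closure (D ` {x\<in>Vs. norm x \<le> real n}))"
      using e(1) by (intro exI[of _ n] exI[of _ b0] exI[of _ e]) blast
    then show False using contra by (rule notE[rotated])
  qed
  have "X interior_of \<Union> (range A) = {}"
  proof (rule Baire_category_alt)
    show "completely_metrizable_space X \<or> locally_compact_space X \<and> regular_space X" using cm by blast
    show "countable (range A)" by simp
    fix T assume "T \<in> range A"
    then obtain n where "T = A n" by blast
    moreover have "closedin X (A n)" unfolding X_def by (rule closed_subset[OF AB]) (simp add: A_def)
    ultimately show "closedin X T \<and> X interior_of T = {}" using int0 by blast
  qed
  moreover have "X interior_of \<Union> (range A) = B" using UA interior_of_topspace[of X] by (simp add: X_def)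
  moreover have "0 \<in> B" unfolding B_def using lin_on_0[OF sub lin] subspace_0[OF sub] by (metis image_eqI)
  ultimately show False by auto
qed


lemma approx_lift:
  fixes Vs :: "'a::{real_inner,complete_space} set" and D :: "'a \<Rightarrow> 'a"
  assumes sub: "subspace Vs" and lin: "lin_on Vs D" and clB: "closed (D ` Vs)"
  shows "\<exists>M\<ge>0. \<forall>b\<in>D ` Vs. \<forall>\<eta>>0. \<exists>x\<in>Vs. norm x \<le> M * norm b \<and> norm (D x - b) < \<eta>"
proof -
  obtain n :: nat and b0 e where e: "e > 0" and b0: "b0 \<in> D ` Vs"
    and ball: "\<forall>b\<in>D ` Vs. dist b b0 < e \<longrightarrow> b \<in> closure (D ` {x\<in>Vs. norm x \<le> real n})"
    using baire_step[OF sub lin clB] by blast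
  have subB: "subspace (D ` Vs)" by (rule lin_image_subspace[OF sub lin])
  have C: "\<exists>x\<in>Vs. norm x \<le> 2 * real n \<and> norm (D x - b) < \<eta>"
    if bB: "b \<in> D ` Vs" and bn: "norm b < e" and eta: "\<eta> > 0" for b \<eta>
  proof -
    have "b0 + b \<in> D ` Vs" using subspace_add[OF subB b0 bB] .
    moreover have "dist (b0 + b) b0 < e" using bn by (simp add: dist_norm)
    ultimately have c1: "b0 + b \<in> closure (D ` {x\<in>Vs. norm x \<le> real n})" using ball by blast
    have c2: "b0 \<in> closure (D ` {x\<in>Vs. norm x \<le> real n})" using ball b0 e by (metis dist_self)
    obtain y1 where y1: "y1 \<in> D ` {x\<in>Vs. norm x \<le> real n}" "dist y1 (b0 + b) < \<eta>/2"
      using c1 eta unfolding closure_approachable by (meson half_gt_zero)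
    obtain y2 where y2: "y2 \<in> D ` {x\<in>Vs. norm x \<le> real n}" "dist y2 b0 < \<eta>/2"
      using c2 eta unfolding closure_approachable by (meson half_gt_zero)
    obtain x1 where x1: "x1 \<in> Vs" "norm x1 \<le> real n" "y1 = D x1" using y1(1) by (auto simp: image_iff)
    obtain x2 where x2: "x2 \<in> Vs" "norm x2 \<le> real n" "y2 = D x2" using y2(1) by (auto simp: image_iff)
    have xV: "x1 - x2 \<in> Vs" using sub x1 x2 subspace_diff by blast
    have Dx: "D (x1 - x2) = D x1 - D x2" by (rule lin_on_diff[OF sub lin x1(1) x2(1)])
    have "norm (x1 - x2) \<le> norm x1 + norm x2" by (rule norm_triangle_ineq4)
    then have nx: "norm (x1 - x2) \<le> 2 * real n" using x1 x2 by linarith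
    have "D (x1 - x2) - b = (D x1 - (b0 + b)) - (D x2 - b0)" using Dx by (simp add: algebra_simps)
    then have "norm (D (x1 - x2) - b) \<le> norm (D x1 - (b0 + b)) + norm (D x2 - b0)"
      by (metis norm_triangle_ineq4)
    also have "\<dots> < \<eta>/2 + \<eta>/2" using y1(2) y2(2) x1 x2 by (simp add: dist_norm)
    finally show ?thesis using xV nx by auto
  qed
  define M where "M = 4 * real n / e"
  have M0: "M \<ge> 0" unfolding M_def using e by simp
  show ?thesis
  proof (intro exI[of _ M] conjI M0 ballI allI impI)
    fix b :: 'a and \<eta> :: real assume bB: "b \<in> D ` Vs" and eta: "\<eta> > 0"
    show "\<exists>x\<in>Vs. norm x \<le> M * norm b \<and> norm (D x - b) < \<eta>"
    proof (cases "b = 0")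
      case True
      then show ?thesis using subspace_0[OF sub] lin_on_0[OF sub lin] eta by (intro bexI[of _ 0]) auto
    next
      case False
      define t where "t = e / (2 * norm b)"
      have t0: "t > 0" unfolding t_def using e False by simp
      have tb: "t *\<^sub>R b \<in> D ` Vs" using subspace_scale[OF subB bB] .
      have ntb: "norm (t *\<^sub>R b) < e" unfolding t_def using e False by simp
      obtain x' where x': "x' \<in> Vs" "norm x' \<le> 2 * real n" "norm (D x' - t *\<^sub>R b) < \<eta> * t"
        using C[OF tb ntb] eta t0 by (meson mult_pos_pos)
      define x where "x = (1/t) *\<^sub>R x'"
      have xV: "x \<in> Vs" unfolding x_def using subspace_scale[OF sub x'(1)] .
      have Dx: "D x = (1/t) *\<^sub>R D x'" unfolding x_def by (rule lin_on_scale[OF lin x'(1)])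
      have "norm x = norm x' / t" unfolding x_def using t0 by simp
      also have "\<dots> \<le> 2 * real n / t" using x'(2) t0 by (simp add: divide_right_mono)
      also have "\<dots> = M * norm b" unfolding t_def M_def using e False by (simp add: field_simps)
      finally have nx: "norm x \<le> M * norm b" .
      have "D x - b = (1/t) *\<^sub>R (D x' - t *\<^sub>R b)" using Dx t0 by (simp add: algebra_simps)
      then have "norm (D x - b) = norm (D x' - t *\<^sub>R b) / t" using t0 by simp
      also have "\<dots> < \<eta>" using x'(3) t0 by (simp add: divide_less_eq)
      finally show ?thesis using xV nx by blast
    qed
  qed
qed

lemma exact_lift:
  fixes Vs :: "'a::{real_inner,complete_space} set" and D :: "'a \<Rightarrow> 'a"
  assumes sub: "subspace Vs" and lin: "lin_on Vs D" and clB: "closed (D ` Vs)"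
    and clG: "closed ((\<lambda>x. (x, D x)) ` Vs)"
  shows "\<exists>c\<ge>0. \<forall>b\<in>D ` Vs. \<exists>x\<in>Vs. D x = b \<and> norm x \<le> c * norm b"
proof -
  obtain M where M0: "M \<ge> 0" and M: "\<forall>b\<in>D ` Vs. \<forall>\<eta>>0. \<exists>x\<in>Vs. norm x \<le> M * norm b \<and> norm (D x - b) < \<eta>"
    using approx_lift[OF sub lin clB] by (elim exE conjE) (rule that)
  have subB: "subspace (D ` Vs)" by (rule lin_image_subspace[OF sub lin])
  define P where "P b x \<longleftrightarrow> x \<in> Vs \<and> norm x \<le> M * norm b \<and> norm (D x - b) \<le> norm b / 2" for b x
  define g where "g b = (SOME x. P b x)" for b
  have gP: "P b (g b)" if "b \<in> D ` Vs" for b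
  proof -
    have "\<exists>x. P b x"
    proof (cases "b = 0")
      case True
      then show ?thesis unfolding P_def using subspace_0[OF sub] lin_on_0[OF sub lin]
        by (intro exI[of _ 0]) simp
    next
      case False
      then have "norm b / 2 > 0" by simp
      then have "\<exists>x\<in>Vs. norm x \<le> M * norm b \<and> norm (D x - b) < norm b / 2"
        using M that \<open>norm b / 2 > 0\<close> by (meson M)
      then obtain x where "x \<in> Vs" "norm x \<le> M * norm b" "norm (D x - b) < norm b / 2"
        by (elim bexE conjE)
      then show ?thesis unfolding P_def by (intro exI[of _ x]) simp
    qed
    then show ?thesis unfolding g_def by (rule someI_ex)
  qed
  show ?thesis
  proof (intro exI[of _ "2 * M"] conjI ballI)
    show "0 \<le> 2 * M" using M0 by simp
    fix b assume bB: "b \<in> D ` Vs"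
    define r where "r k = ((\<lambda>c. c - D (g c)) ^^ k) b" for k
    have r0: "r 0 = b" and rS: "r (Suc k) = r k - D (g (r k))" for k unfolding r_def by simp_all
    have rB: "r k \<in> D ` Vs" for k
    proof (induction k)
      case 0 then show ?case using bB r0 by simp
    next
      case (Suc k)
      have "g (r k) \<in> Vs" using gP[OF Suc] unfolding P_def by simp
      then have "D (g (r k)) \<in> D ` Vs" by simp
      then show ?case unfolding rS using subspace_diff[OF subB Suc] by blast
    qed
    have rn: "norm (r k) \<le> norm b * (1/2)^k" for k
    proof (induction k)
      case 0 then show ?case using r0 by simp
    next
      case (Suc k)
      have "norm (r (Suc k)) = norm (D (g (r k)) - r k)" unfolding rS by (simp add: norm_minus_commute)
      also have "\<dots> \<le> norm (r k) / 2" using gP[OF rB[of k]] unfolding P_def by simp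
      also have "\<dots> \<le> norm b * (1/2)^k / 2" using Suc by simp
      finally show ?case by simp
    qed
    define S where "S k = (\<Sum>i<k. g (r i))" for k
    have gV: "g (r i) \<in> Vs" for i using gP[OF rB[of i]] unfolding P_def by simp
    have gn: "norm (g (r i)) \<le> M * norm b * (1/2)^i" for i
    proof -
      have "norm (g (r i)) \<le> M * norm (r i)" using gP[OF rB[of i]] unfolding P_def by simp
      also have "\<dots> \<le> M * (norm b * (1/2)^i)" using rn[of i] M0 by (intro mult_left_mono) auto
      finally show ?thesis by (simp add: mult.assoc)
    qed
    have SV: "S k \<in> Vs" for k unfolding S_def using gV by (intro subspace_sum[OF sub]) auto
    have SD: "D (S k) = b - r k" for k
    proof (induction k)
      case 0 then show ?case unfolding S_def using r0 lin_on_0[OF sub lin] by simp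
    next
      case (Suc k)
      have "S (Suc k) = S k + g (r k)" unfolding S_def by simp
      then have "D (S (Suc k)) = D (S k) + D (g (r k))" using lin_on_add[OF lin SV gV] by simp
      then show ?case using Suc rS by simp
    qed
    have Sdiff: "norm (S n - S m) \<le> 2 * M * norm b * ((1/2)^m - (1/2)^n)" if "m \<le> n" for m n
      using that
    proof (induction n)
      case 0 then show ?case by simp
    next
      case (Suc n)
      show ?case
      proof (cases "m = Suc n")
        case True then show ?thesis by simp
      next
        case False
        then have mn: "m \<le> n" using Suc by simp
        have "S (Suc n) - S m = (S n - S m) + g (r n)" unfolding S_def by simp
        then have "norm (S (Suc n) - S m) \<le> norm (S n - S m) + norm (g (r n))"
          by (metis norm_triangle_ineq)
        also have "\<dots> \<le> 2 * M * norm b * ((1/2)^m - (1/2)^n) + M * norm b * (1/2)^n"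
          using Suc.IH[OF mn] gn[of n] by linarith
        also have "\<dots> = 2 * M * norm b * ((1/2)^m - (1/2)^Suc n)" by (simp add: algebra_simps)
        finally show ?thesis .
      qed
    qed
    have Sdiff2: "norm (S n - S m) \<le> 2 * M * norm b * (1/2)^m" if "m \<le> n" for m n
    proof -
      have "2 * M * norm b * ((1/2)^m - (1/2)^n) \<le> 2 * M * norm b * (1/2)^m"
        using M0 by (intro mult_left_mono) auto
      then show ?thesis using Sdiff[OF that] by linarith
    qed
    have "Cauchy S"
    proof (rule CauchyI)
      fix e :: real assume e: "e > 0"
      have epos: "e / (4 * M * norm b + 1) > 0" using e M0 by (simp add: add_nonneg_pos)
      obtain N where N: "(1/2::real)^N < e / (4 * M * norm b + 1)"
        using real_arch_pow_inv[OF epos, of "1/2"] by auto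
      have K: "4 * M * norm b * (1/2)^N < e"
      proof -
        have pos: "4 * M * norm b + 1 > 0" using M0 by (simp add: add_nonneg_pos)
        have "(4 * M * norm b) * (1/2::real)^N \<le> (4 * M * norm b + 1) * (1/2)^N"
          by (intro mult_right_mono) auto
        also have "\<dots> < (4 * M * norm b + 1) * (e / (4 * M * norm b + 1))"
          using N pos by (intro mult_strict_left_mono) auto
        also have "\<dots> = e" using pos by simp
        finally show ?thesis .
      qed
      show "\<exists>N. \<forall>m\<ge>N. \<forall>n\<ge>N. norm (S m - S n) < e"
      proof (intro exI[of _ N] allI impI)
        fix m n assume m: "m \<ge> N" and n: "n \<ge> N"
        have eq: "S m - S n = (S m - S N) - (S n - S N)" by simp
        have "norm (S m - S n) \<le> norm (S m - S N) + norm (S n - S N)"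
          unfolding eq by (rule norm_triangle_ineq4)
        also have "\<dots> \<le> 2 * M * norm b * (1/2)^N + 2 * M * norm b * (1/2)^N"
          using Sdiff2[OF m] Sdiff2[OF n] by linarith
        also have "\<dots> = 4 * M * norm b * (1/2)^N" by simp
        finally show "norm (S m - S n) < e" using K by linarith
      qed
    qed
    then obtain x where Sx: "S \<longlonglongrightarrow> x" using convergent_eq_Cauchy by blast
    have r0lim: "r \<longlonglongrightarrow> 0"
    proof (rule Lim_null_comparison)
      show "\<forall>\<^sub>F k in sequentially. norm (r k) \<le> norm b * (1/2)^k" using rn by simp
      show "(\<lambda>k. norm b * (1/2::real)^k) \<longlonglongrightarrow> 0"
        by (intro tendsto_mult_right_zero LIMSEQ_power_zero) simp
    qed
    have "(\<lambda>k. D (S k)) \<longlonglongrightarrow> b - 0" unfolding SD by (intro tendsto_intros r0lim)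
    then have "(\<lambda>k. (S k, D (S k))) \<longlonglongrightarrow> (x, b)" using Sx by (simp add: tendsto_Pair)
    moreover have "(S k, D (S k)) \<in> (\<lambda>x. (x, D x)) ` Vs" for k using SV by simp
    ultimately have "(x, b) \<in> (\<lambda>x. (x, D x)) ` Vs" by (rule closed_sequentially[OF clG, rotated])
    then have xV: "x \<in> Vs" and Dx: "D x = b" by auto
    have "norm x \<le> 2 * M * norm b"
    proof (rule LIMSEQ_le_const2)
      show "(\<lambda>k. norm (S k)) \<longlonglongrightarrow> norm x" by (intro tendsto_intros Sx)
      have "norm (S k) \<le> 2 * M * norm b" for k
        using Sdiff2[of 0 k] by (simp add: S_def)
      then show "\<exists>N. \<forall>n\<ge>N. norm (S n) \<le> 2 * M * norm b" by blast
    qed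
    then show "\<exists>x\<in>Vs. D x = b \<and> norm x \<le> 2 * M * norm b" using xV Dx by blast
  qed
qed

lemma poincare:
  fixes Vs :: "'a::{real_inner,complete_space} set" and D :: "'a \<Rightarrow> 'a"
  assumes sub: "subspace Vs" and lin: "lin_on Vs D" and clB: "closed (D ` Vs)"
    and clG: "closed ((\<lambda>x. (x, D x)) ` Vs)"
  shows "\<exists>c\<ge>0. \<forall>y\<in>Vs. \<exists>z\<in>Vs. D z = 0 \<and> norm (y - z) \<le> c * norm (D y)"
proof -
  obtain c where c0: "c \<ge> 0" and c: "\<forall>b\<in>D ` Vs. \<exists>x\<in>Vs. D x = b \<and> norm x \<le> c * norm b"
    using exact_lift[OF assms] by blast
  show ?thesis
  proof (intro exI[of _ c] conjI c0 ballI)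
    fix y assume y: "y \<in> Vs"
    then obtain x where x: "x \<in> Vs" "D x = D y" "norm x \<le> c * norm (D y)" using c by blast
    have "y - x \<in> Vs" using sub y x subspace_diff by blast
    moreover have "D (y - x) = 0" using lin_on_diff[OF sub lin y x(1)] x by simp
    ultimately show "\<exists>z\<in>Vs. D z = 0 \<and> norm (y - z) \<le> c * norm (D y)" using x
      by (intro bexI[of _ "y - x"]) auto
  qed
qed

lemma quad_le: fixes x a :: real assumes "0 \<le> a" "x * x \<le> a * x" "0 \<le> x" shows "x \<le> a"
proof (cases "x = 0")
  case True then show ?thesis using assms by simp
next
  case False then have "x > 0" using assms by simp
  then show ?thesis using assms(2) by (simp add: mult_le_cancel_right)
qed

lemma cs1: "inner x y \<le> norm x * norm (y::'a::real_inner)"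
  by (rule norm_cauchy_schwarz)
lemma cs2: "- inner x y \<le> norm x * norm (y::'a::real_inner)"
  using Cauchy_Schwarz_ineq2[of x y] by linarith

lemma csX: fixes x y :: "'a::real_inner"
  assumes "norm x \<le> X" shows "inner x y \<le> X * norm y" "- inner x y \<le> X * norm y"
  using cs1[of x y] cs2[of x y] mult_right_mono[OF assms norm_ge_zero[of y]] by linarith+

lemma nn: "norm x * norm x = inner x (x::'a::real_inner)"
  by (metis power2_eq_square power2_norm_eq_inner)

lemma etaX: fixes a nx ny X \<eta> :: real
  assumes "\<bar>a\<bar> \<le> \<eta> * nx * ny" "\<eta> * nx \<le> X" "0 \<le> ny"
  shows "a \<le> X * ny" "- a \<le> X * ny"
proof -
  have "\<eta> * nx * ny \<le> X * ny" using mult_right_mono[OF assms(2,3)] .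
  then show "a \<le> X * ny" "- a \<le> X * ny" using assms(1) by linarith+
qed

lemma etaF: fixes \<eta> n A F :: real
  assumes "n \<le> A * F" "0 \<le> \<eta>" shows "\<eta> * n \<le> A * (\<eta> * F)"
  using mult_left_mono[OF assms] by (simp add: algebra_simps)

lemma powmono: fixes G :: real assumes "1 \<le> G" "k \<le> m" "0 \<le> T" shows "G^k * T \<le> G^m * T"
  using assms by (intro mult_right_mono power_increasing) auto

lemma core_mod:
  fixes V0 V1 V2 :: "'v::real_inner set" and d0 d1 :: "'v \<Rightarrow> 'v"
    and i0 i1 i2 :: "'v \<Rightarrow> 'w::real_inner" and s' u' p' :: 'v and f :: 'w and G :: real
  assumes sub: "subspace V0" "subspace V1" "subspace V2"
    and dV: "\<And>x. x \<in> V0 \<Longrightarrow> d0 x \<in> V1" "\<And>x. x \<in> V1 \<Longrightarrow> d1 x \<in> V2"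
    and dd: "\<And>x. x \<in> V0 \<Longrightarrow> d1 (d0 x) = 0"
    and dlin: "lin_on V0 d0" "lin_on V1 d1"
    and ilin: "lin_on V0 i0" "lin_on V1 i1" "lin_on V2 i2"
    and G1: "1 \<le> G"
    and ib0: "\<And>x. x \<in> V0 \<Longrightarrow> norm (i0 x) \<le> G * norm x"
    and ib1: "\<And>x. x \<in> V1 \<Longrightarrow> norm (i1 x) \<le> G * norm x"
    and cyc0: "\<And>x. x \<in> V0 \<Longrightarrow> d0 x = 0 \<Longrightarrow> norm x \<le> G * norm (i0 x)"
    and cyc1: "\<And>x. x \<in> V1 \<Longrightarrow> d1 x = 0 \<Longrightarrow> norm x \<le> G * norm (i1 x)"
    and cyc2: "\<And>x. x \<in> V1 \<Longrightarrow> norm (d1 x) \<le> G * norm (i2 (d1 x))"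
    and DP0: "\<And>x. x \<in> V0 \<Longrightarrow> \<exists>z\<in>V0. d0 z = 0 \<and> norm (x - z) \<le> G * norm (d0 x)"
    and DP1: "\<And>x. x \<in> V1 \<Longrightarrow> \<exists>z\<in>V1. d1 z = 0 \<and> norm (x - z) \<le> G * norm (d1 x)"
    and Jproj: "\<And>z. z \<in> V1 \<Longrightarrow> \<exists>\<beta>\<in>d0 ` V0. \<forall>b\<in>d0 ` V0. inner (i1 z - i1 \<beta>) (i1 b) = 0"
    and mS: "s' \<in> V0" "u' \<in> V1" "p' \<in> V1" "d1 p' = 0" "\<And>b. b \<in> V0 \<Longrightarrow> inner (i1 p') (i1 (d0 b)) = 0"
    and me1: "\<And>t. t \<in> V0 \<Longrightarrow> inner (i0 s') (i0 t) - inner (i1 u') (i1 (d0 t)) = 0"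
    and me2: "\<And>v. v \<in> V1 \<Longrightarrow> inner (i1 (d0 s')) (i1 v) + inner (i2 (d1 u')) (i2 (d1 v)) + inner (i1 p') (i1 v) = inner f (i1 v)"
    and me3: "\<And>q. q \<in> V1 \<Longrightarrow> d1 q = 0 \<Longrightarrow> (\<forall>b\<in>V0. inner (i1 q) (i1 (d0 b)) = 0) \<Longrightarrow> inner (i1 u') (i1 q) = 0"
  shows "norm (d0 s') \<le> G * norm f" "norm p' \<le> G * norm f" "norm (d1 u') \<le> 3 * G^4 * norm f"
    "norm s' \<le> 2 * G^4 * norm f" "norm u' \<le> 11 * G^9 * norm f"
proof -
  define F where "F = norm f"
  have F0: "0 \<le> F" unfolding F_def by simp
  have G0: "0 \<le> G" using G1 by simp
  have i2_0: "i2 0 = 0" by (rule lin_on_0[OF sub(3) ilin(3)])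
  have i1_0: "i1 0 = 0" by (rule lin_on_0[OF sub(2) ilin(2)])
  have d1_0: "d1 0 = 0" by (rule lin_on_0[OF sub(2) dlin(2)])
  have d0_0: "d0 0 = 0" by (rule lin_on_0[OF sub(1) dlin(1)])
  have ds'V: "d0 s' \<in> V1" using dV(1)[OF mS(1)] .
  have E1: "inner (i1 (d0 s')) (i1 (d0 s')) + inner (i2 (d1 u')) (i2 (d1 (d0 s'))) + inner (i1 p') (i1 (d0 s')) = inner f (i1 (d0 s'))"
    by (rule me2[OF ds'V])
  have "i2 (d1 (d0 s')) = 0" using dd[OF mS(1)] i2_0 by simp
  moreover have "inner (i1 p') (i1 (d0 s')) = 0" by (rule mS(5)[OF mS(1)])
  ultimately have "inner (i1 (d0 s')) (i1 (d0 s')) = inner f (i1 (d0 s'))" using E1 by simp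
  then have "norm (i1 (d0 s')) * norm (i1 (d0 s')) = inner f (i1 (d0 s'))" by (simp only: nn)
  also have "\<dots> \<le> F * norm (i1 (d0 s'))" unfolding F_def by (rule cs1)
  finally have m1a: "norm (i1 (d0 s')) \<le> F" by (rule quad_le[OF F0 _ norm_ge_zero])
  have m1: "norm (d0 s') \<le> G * F"
    using cyc1[OF ds'V dd[OF mS(1)]] mult_left_mono[OF m1a G0] by linarith
  have E2: "inner (i1 (d0 s')) (i1 p') + inner (i2 (d1 u')) (i2 (d1 p')) + inner (i1 p') (i1 p') = inner f (i1 p')"
    by (rule me2[OF mS(3)])
  have "i2 (d1 p') = 0" using mS(4) i2_0 by simp
  moreover have "inner (i1 (d0 s')) (i1 p') = 0" using mS(5)[OF mS(1)] by (simp add: inner_commute)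
  ultimately have "inner (i1 p') (i1 p') = inner f (i1 p')" using E2 by simp
  then have "norm (i1 p') * norm (i1 p') = inner f (i1 p')" by (simp only: nn)
  also have "\<dots> \<le> F * norm (i1 p')" unfolding F_def by (rule cs1)
  finally have m2a: "norm (i1 p') \<le> F" by (rule quad_le[OF F0 _ norm_ge_zero])
  have m2: "norm p' \<le> G * F"
    using cyc1[OF mS(3,4)] mult_left_mono[OF m2a G0] by linarith
  obtain z1 where z1: "z1 \<in> V1" "d1 z1 = 0" "norm (u' - z1) \<le> G * norm (d1 u')" using DP1[OF mS(2)] by blast
  define x' where "x' = u' - z1"
  have x'V: "x' \<in> V1" unfolding x'_def using sub(2) mS(2) z1(1) subspace_diff by blast
  have dx': "d1 x' = d1 u'" unfolding x'_def using lin_on_diff[OF sub(2) dlin(2) mS(2) z1(1)] z1(2) by simp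
  have nx': "norm x' \<le> G * norm (d1 u')" using z1(3) unfolding x'_def .
  have ix': "norm (i1 x') \<le> G * (G * norm (d1 u'))"
    using ib1[OF x'V] mult_left_mono[OF nx' G0] by linarith
  have e0: "inner (i1 (d0 s')) (i1 x') + inner (i2 (d1 u')) (i2 (d1 x')) + inner (i1 p') (i1 x') = inner f (i1 x')"
    by (rule me2[OF x'V])
  have e: "norm (i2 (d1 u')) * norm (i2 (d1 u')) = inner f (i1 x') - inner (i1 (d0 s')) (i1 x') - inner (i1 p') (i1 x')"
    using e0 unfolding dx' nn by linarith
  have t1: "inner f (i1 x') \<le> F * norm (i1 x')" unfolding F_def by (rule cs1)
  have t2: "- inner (i1 (d0 s')) (i1 x') \<le> F * norm (i1 x')" using csX(2)[OF m1a] .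
  have t3: "- inner (i1 p') (i1 x') \<le> F * norm (i1 x')" using csX(2)[OF m2a] .
  have "norm (i2 (d1 u')) * norm (i2 (d1 u')) \<le> 3 * F * norm (i1 x')"
    using e t1 t2 t3 by linarith
  also have "\<dots> \<le> 3 * F * (G * (G * norm (d1 u')))" using ix' F0 by (intro mult_left_mono) auto
  finally have a3: "norm (i2 (d1 u')) * norm (i2 (d1 u')) \<le> 3 * F * (G * (G * norm (d1 u')))" .
  have c2: "norm (d1 u') \<le> G * norm (i2 (d1 u'))" by (rule cyc2[OF mS(2)])
  have "norm (d1 u') * norm (d1 u') \<le> (G * norm (i2 (d1 u'))) * (G * norm (i2 (d1 u')))"
    using c2 G0 by (intro mult_mono) auto
  also have "\<dots> = (G * G) * (norm (i2 (d1 u')) * norm (i2 (d1 u')))" by (simp only: ac_simps)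
  also have "\<dots> \<le> (G * G) * (3 * F * (G * (G * norm (d1 u'))))" using a3 G0 by (intro mult_left_mono) auto
  also have "\<dots> = (3 * G^4 * F) * norm (d1 u')" by (simp add: power4_eq_xxxx algebra_simps)
  finally have "norm (d1 u') * norm (d1 u') \<le> (3 * G^4 * F) * norm (d1 u')" .
  then have m3: "norm (d1 u') \<le> 3 * G^4 * F" by (rule quad_le[rotated, OF _ norm_ge_zero]) (use F0 G0 in simp)
  show "norm (d0 s') \<le> G * norm f" "norm p' \<le> G * norm f" "norm (d1 u') \<le> 3 * G^4 * norm f"
    using m1 m2 m3 unfolding F_def by auto
  obtain \<zeta> where \<zeta>: "\<zeta> \<in> V0" "d0 \<zeta> = 0" "norm (s' - \<zeta>) \<le> G * norm (d0 s')" using DP0[OF mS(1)] by blast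
  have sz: "norm (s' - \<zeta>) \<le> G * (G * F)" using \<zeta>(3) mult_left_mono[OF m1 G0] by linarith
  have "inner (i0 s') (i0 \<zeta>) - inner (i1 u') (i1 (d0 \<zeta>)) = 0" by (rule me1[OF \<zeta>(1)])
  then have o1: "inner (i0 s') (i0 \<zeta>) = 0" using \<zeta>(2) i1_0 by simp
  have i0d: "i0 (\<zeta> - s') = i0 \<zeta> - i0 s'" by (rule lin_on_diff[OF sub(1) ilin(1) \<zeta>(1) mS(1)])
  have zsV: "\<zeta> - s' \<in> V0" using sub(1) \<zeta>(1) mS(1) subspace_diff by blast
  have nzs: "norm (i0 (\<zeta> - s')) \<le> G * (G * (G * F))"
  proof -
    have "norm (i0 (\<zeta> - s')) \<le> G * norm (\<zeta> - s')" by (rule ib0[OF zsV])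
    also have "\<dots> \<le> G * (G * (G * F))" using sz G0 by (simp add: norm_minus_commute mult_left_mono)
    finally show ?thesis .
  qed
  have "norm (i0 \<zeta>) * norm (i0 \<zeta>) = inner (i0 (\<zeta> - s')) (i0 \<zeta>)"
    unfolding nn i0d inner_diff_left using o1 by simp
  also have "\<dots> \<le> G * (G * (G * F)) * norm (i0 \<zeta>)" by (rule csX(1)[OF nzs])
  finally have iz: "norm (i0 \<zeta>) \<le> G * (G * (G * F))"
    by (rule quad_le[rotated, OF _ norm_ge_zero]) (use F0 G0 in simp)
  have nz: "norm \<zeta> \<le> G^4 * F"
  proof -
    have "norm \<zeta> \<le> G * norm (i0 \<zeta>)" by (rule cyc0[OF \<zeta>(1,2)])
    also have "\<dots> \<le> G * (G * (G * (G * F)))" using iz G0 by (intro mult_left_mono) auto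
    also have "\<dots> = G^4 * F" by (simp add: eval_nat_numeral algebra_simps)
    finally show ?thesis .
  qed
  have "G * (G * F) = G^2 * F" by (simp add: eval_nat_numeral algebra_simps)
  then have "norm (s' - \<zeta>) \<le> G^4 * F" using sz powmono[OF G1, of 2 4 F] F0 by linarith
  moreover have "norm s' \<le> norm (s' - \<zeta>) + norm \<zeta>" by (metis diff_add_cancel norm_triangle_ineq)
  ultimately have m4: "norm s' \<le> 2 * G^4 * F" using nz by linarith
  show "norm s' \<le> 2 * G^4 * norm f" using m4 unfolding F_def .
  have liftB: "\<exists>\<tau>0\<in>V0. d0 \<tau>0 = \<beta> \<and> norm \<tau>0 \<le> G * norm \<beta>" if \<beta>in: "\<beta> \<in> d0 ` V0" for \<beta>
  proof -
    obtain \<tau> where \<tau>: "\<tau> \<in> V0" "\<beta> = d0 \<tau>" using \<beta>in by blast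
    obtain \<zeta>0 where \<zeta>0: "\<zeta>0 \<in> V0" "d0 \<zeta>0 = 0" "norm (\<tau> - \<zeta>0) \<le> G * norm (d0 \<tau>)" using DP0[OF \<tau>(1)] by blast
    have "\<tau> - \<zeta>0 \<in> V0" using sub(1) \<tau>(1) \<zeta>0(1) subspace_diff by blast
    moreover have "d0 (\<tau> - \<zeta>0) = \<beta>" using lin_on_diff[OF sub(1) dlin(1) \<tau>(1) \<zeta>0(1)] \<zeta>0(2) \<tau>(2) by simp
    ultimately show ?thesis using \<zeta>0(3) \<tau>(2) by (intro bexI[of _ "\<tau> - \<zeta>0"]) simp_all
  qed
  have nx'2: "norm x' \<le> 3 * G^5 * F"
  proof -
    have "norm x' \<le> G * (3 * G^4 * F)" using nx' mult_left_mono[OF m3 G0] by linarith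
    also have "\<dots> = 3 * G^5 * F" by (simp add: eval_nat_numeral algebra_simps)
    finally show ?thesis .
  qed
  have ix'2: "norm (i1 x') \<le> 3 * G^6 * F"
  proof -
    have "norm (i1 x') \<le> G * norm x'" by (rule ib1[OF x'V])
    also have "\<dots> \<le> G * (3 * G^5 * F)" using nx'2 G0 by (intro mult_left_mono) auto
    also have "\<dots> = 3 * G^6 * F" by (simp add: eval_nat_numeral algebra_simps)
    finally show ?thesis .
  qed
  obtain \<beta> where \<beta>B: "\<beta> \<in> d0 ` V0" and \<beta>p: "\<forall>b\<in>d0 ` V0. inner (i1 z1 - i1 \<beta>) (i1 b) = 0"
    using Jproj[OF z1(1)] by blast
  obtain \<tau>0 where \<tau>0: "\<tau>0 \<in> V0" "d0 \<tau>0 = \<beta>" "norm \<tau>0 \<le> G * norm \<beta>" using liftB[OF \<beta>B] by blast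
  have \<beta>V: "\<beta> \<in> V1" using dV(1)[OF \<tau>0(1)] \<tau>0(2) by simp
  have d\<beta>: "d1 \<beta> = 0" using dd[OF \<tau>0(1)] \<tau>0(2) by simp
  define q' where "q' = z1 - \<beta>"
  have q'V: "q' \<in> V1" unfolding q'_def using sub(2) z1(1) \<beta>V subspace_diff by blast
  have iq': "i1 q' = i1 z1 - i1 \<beta>" unfolding q'_def by (rule lin_on_diff[OF sub(2) ilin(2) z1(1) \<beta>V])
  have dq': "d1 q' = 0" unfolding q'_def using lin_on_diff[OF sub(2) dlin(2) z1(1) \<beta>V] z1(2) d\<beta> by simp
  have q'H: "\<forall>b\<in>V0. inner (i1 q') (i1 (d0 b)) = 0" using \<beta>p unfolding iq' by blast
  have uq: "inner (i1 u') (i1 q') = 0" by (rule me3[OF q'V dq' q'H])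
  have q\<beta>: "inner (i1 q') (i1 \<beta>) = 0" using \<beta>p \<beta>B unfolding iq' by blast
  have z1eq: "z1 = u' - x'" unfolding x'_def by simp
  have iz1: "i1 z1 = i1 u' - i1 x'" unfolding z1eq by (rule lin_on_diff[OF sub(2) ilin(2) mS(2) x'V])
  have "norm (i1 q') * norm (i1 q') = - inner (i1 q') (i1 x')"
  proof -
    have "norm (i1 q') * norm (i1 q') = inner (i1 q') (i1 z1 - i1 \<beta>)" unfolding nn iq' ..
    also have "\<dots> = inner (i1 q') (i1 u') - inner (i1 q') (i1 x')"
      using q\<beta> unfolding iz1 by (simp add: inner_diff_right)
    also have "\<dots> = - inner (i1 q') (i1 x')" using uq by (simp add: inner_commute)
    finally show ?thesis .
  qed
  also have "\<dots> \<le> norm (i1 q') * (3 * G^6 * F)"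
    using cs2[of "i1 q'" "i1 x'"] mult_left_mono[OF ix'2 norm_ge_zero[of "i1 q'"]] by linarith
  finally have "norm (i1 q') * norm (i1 q') \<le> (3 * G^6 * F) * norm (i1 q')" by (simp add: mult.commute)
  then have niq: "norm (i1 q') \<le> 3 * G^6 * F" by (rule quad_le[rotated, OF _ norm_ge_zero]) (use F0 G0 in simp)
  have is': "norm (i0 s') \<le> 2 * G^5 * F"
  proof -
    have "norm (i0 s') \<le> G * norm s'" by (rule ib0[OF mS(1)])
    also have "\<dots> \<le> G * (2 * G^4 * F)" using m4 G0 by (intro mult_left_mono) auto
    also have "\<dots> = 2 * G^5 * F" by (simp add: eval_nat_numeral algebra_simps)
    finally show ?thesis .
  qed
  have nb: "norm \<beta> \<le> G * norm (i1 \<beta>)" by (rule cyc1[OF \<beta>V d\<beta>])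
  have it0: "norm (i0 \<tau>0) \<le> G^3 * norm (i1 \<beta>)"
  proof -
    have "norm (i0 \<tau>0) \<le> G * norm \<tau>0" by (rule ib0[OF \<tau>0(1)])
    also have "\<dots> \<le> G * (G * norm \<beta>)" using \<tau>0(3) G0 by (intro mult_left_mono) auto
    also have "\<dots> \<le> G * (G * (G * norm (i1 \<beta>)))" using nb G0 by (intro mult_left_mono) auto
    also have "\<dots> = G^3 * norm (i1 \<beta>)" by (simp add: eval_nat_numeral algebra_simps)
    finally show ?thesis .
  qed
  have bb1: "norm (i1 \<beta>) * norm (i1 \<beta>) = inner (i1 u') (i1 \<beta>) - inner (i1 x') (i1 \<beta>)"
  proof -
    have "inner (i1 z1 - i1 \<beta>) (i1 \<beta>) = 0" using \<beta>p \<beta>B by blast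
    then have "inner (i1 \<beta>) (i1 \<beta>) = inner (i1 z1) (i1 \<beta>)" by (simp add: inner_diff_left)
    then show ?thesis unfolding nn iz1 by (simp add: inner_diff_left)
  qed
  have bb2: "inner (i1 u') (i1 \<beta>) = inner (i0 s') (i0 \<tau>0)" using me1[OF \<tau>0(1)] \<tau>0(2) by simp
  have bb3: "inner (i0 s') (i0 \<tau>0) \<le> (2 * G^5 * F) * (G^3 * norm (i1 \<beta>))"
  proof -
    have "inner (i0 s') (i0 \<tau>0) \<le> norm (i0 s') * norm (i0 \<tau>0)" by (rule cs1)
    also have "\<dots> \<le> (2 * G^5 * F) * (G^3 * norm (i1 \<beta>))"
      using is' it0 F0 G0 by (intro mult_mono) auto
    finally show ?thesis .
  qed
  have bb4: "- inner (i1 x') (i1 \<beta>) \<le> 3 * G^6 * F * norm (i1 \<beta>)" by (rule csX(2)[OF ix'2])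
  have "norm (i1 \<beta>) * norm (i1 \<beta>) \<le> (2 * G^5 * F) * (G^3 * norm (i1 \<beta>)) + 3 * G^6 * F * norm (i1 \<beta>)"
    using bb1 bb2 bb3 bb4 by linarith
  also have "\<dots> = (2 * G^8 * F + 3 * G^6 * F) * norm (i1 \<beta>)" by (simp add: eval_nat_numeral algebra_simps)
  also have "\<dots> \<le> (5 * G^8 * F) * norm (i1 \<beta>)"
    using powmono[OF G1, of 6 8 F] F0 by (intro mult_right_mono) (auto simp: mult.commute)
  finally have nib: "norm (i1 \<beta>) \<le> 5 * G^8 * F" by (rule quad_le[rotated, OF _ norm_ge_zero]) (use F0 G0 in simp)
  have nb2: "norm \<beta> \<le> 5 * G^9 * F"
  proof -
    have "norm \<beta> \<le> G * (5 * G^8 * F)" using nb mult_left_mono[OF nib G0] by linarith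
    also have "\<dots> = 5 * G^9 * F" by (simp add: eval_nat_numeral algebra_simps)
    finally show ?thesis .
  qed
  have nq2: "norm q' \<le> 3 * G^9 * F"
  proof -
    have "norm q' \<le> G * (3 * G^6 * F)" using cyc1[OF q'V dq'] mult_left_mono[OF niq G0] by linarith
    also have "\<dots> = 3 * G^7 * F" by (simp add: eval_nat_numeral algebra_simps)
    also have "\<dots> \<le> 3 * G^9 * F" using powmono[OF G1, of 7 9 F] F0 by simp
    finally show ?thesis .
  qed
  have "u' = x' + \<beta> + q'" unfolding x'_def q'_def by simp
  then have "norm u' \<le> norm x' + norm \<beta> + norm q'" by (metis norm_triangle_ineq order_trans add_right_mono)
  moreover have "3 * G^5 * F \<le> 3 * G^9 * F" using powmono[OF G1, of 5 9 F] F0 by simp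
  ultimately have "norm u' \<le> 11 * G^9 * F" using nx'2 nb2 nq2 by linarith
  then show "norm u' \<le> 11 * G^9 * norm f" unfolding F_def .
qed

lemma pmono: fixes G T c n :: real
  assumes "1 \<le> G" "k \<le> m" "0 \<le> T" "0 \<le> c" "0 \<le> n"
  shows "c * G^k * T * n \<le> c * G^m * T * n"
  using assms by (intro mult_right_mono mult_left_mono power_increasing) auto

lemma pmono2: fixes G T c :: real
  assumes "1 \<le> G" "k \<le> m" "0 \<le> T" "0 \<le> c"
  shows "c * G^k * T \<le> c * G^m * T"
  using assms by (intro mult_right_mono mult_left_mono power_increasing) auto

lemma core_diff:
  fixes V0 V1 V2 :: "'v::real_inner set" and d0 d1 :: "'v \<Rightarrow> 'v"
    and i0 i1 i2 :: "'v \<Rightarrow> 'w::real_inner" and s u p s' u' p' fh g :: 'v and f :: 'w and G \<eta> :: real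
  assumes sub: "subspace V0" "subspace V1" "subspace V2"
    and dV: "\<And>x. x \<in> V0 \<Longrightarrow> d0 x \<in> V1" "\<And>x. x \<in> V1 \<Longrightarrow> d1 x \<in> V2"
    and dd: "\<And>x. x \<in> V0 \<Longrightarrow> d1 (d0 x) = 0"
    and dlin: "lin_on V0 d0" "lin_on V1 d1"
    and ilin: "lin_on V0 i0" "lin_on V1 i1" "lin_on V2 i2"
    and G1: "1 \<le> G"
    and ib1: "\<And>x. x \<in> V1 \<Longrightarrow> norm (i1 x) \<le> G * norm x"
    and cyc1: "\<And>x. x \<in> V1 \<Longrightarrow> d1 x = 0 \<Longrightarrow> norm x \<le> G * norm (i1 x)"
    and DP0: "\<And>x. x \<in> V0 \<Longrightarrow> \<exists>z\<in>V0. d0 z = 0 \<and> norm (x - z) \<le> G * norm (d0 x)"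
    and DP1: "\<And>x. x \<in> V1 \<Longrightarrow> \<exists>z\<in>V1. d1 z = 0 \<and> norm (x - z) \<le> G * norm (d1 x)"
    and proj: "\<And>z. z \<in> V1 \<Longrightarrow> \<exists>\<beta>\<in>d0 ` V0. \<forall>b\<in>d0 ` V0. inner (z - \<beta>) b = 0"
    and Jproj: "\<And>z. z \<in> V1 \<Longrightarrow> \<exists>\<beta>\<in>d0 ` V0. \<forall>b\<in>d0 ` V0. inner (i1 z - i1 \<beta>) (i1 b) = 0"
    and eta0: "\<And>x y. x \<in> V0 \<Longrightarrow> y \<in> V0 \<Longrightarrow> \<bar>inner x y - inner (i0 x) (i0 y)\<bar> \<le> \<eta> * norm x * norm y"
    and eta1: "\<And>x y. x \<in> V1 \<Longrightarrow> y \<in> V1 \<Longrightarrow> \<bar>inner x y - inner (i1 x) (i1 y)\<bar> \<le> \<eta> * norm x * norm y"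
    and eta2: "\<And>x y. x \<in> V2 \<Longrightarrow> y \<in> V2 \<Longrightarrow> \<bar>inner x y - inner (i2 x) (i2 y)\<bar> \<le> \<eta> * norm x * norm y"
    and eta_nn: "0 \<le> \<eta>"
    and oS: "s \<in> V0" "u \<in> V1" "p \<in> V1" "d1 p = 0" "\<And>b. b \<in> V0 \<Longrightarrow> inner p (d0 b) = 0"
    and oe1: "\<And>t. t \<in> V0 \<Longrightarrow> inner s t - inner u (d0 t) = 0"
    and oe2: "\<And>v. v \<in> V1 \<Longrightarrow> inner (d0 s) v + inner (d1 u) (d1 v) + inner p v = inner fh v"
    and oe3: "\<And>q. q \<in> V1 \<Longrightarrow> d1 q = 0 \<Longrightarrow> (\<forall>b\<in>V0. inner q (d0 b) = 0) \<Longrightarrow> inner u q = 0"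
    and mS: "s' \<in> V0" "u' \<in> V1" "p' \<in> V1" "d1 p' = 0" "\<And>b. b \<in> V0 \<Longrightarrow> inner (i1 p') (i1 (d0 b)) = 0"
    and me1: "\<And>t. t \<in> V0 \<Longrightarrow> inner (i0 s') (i0 t) - inner (i1 u') (i1 (d0 t)) = 0"
    and me2: "\<And>v. v \<in> V1 \<Longrightarrow> inner (i1 (d0 s')) (i1 v) + inner (i2 (d1 u')) (i2 (d1 v)) + inner (i1 p') (i1 v) = inner f (i1 v)"
    and me3: "\<And>q. q \<in> V1 \<Longrightarrow> d1 q = 0 \<Longrightarrow> (\<forall>b\<in>V0. inner (i1 q) (i1 (d0 b)) = 0) \<Longrightarrow> inner (i1 u') (i1 q) = 0"
    and gf: "\<And>v. v \<in> V1 \<Longrightarrow> inner g v = inner f (i1 v)"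
    and m1: "norm (d0 s') \<le> G * norm f" and m2: "norm p' \<le> G * norm f"
    and m3: "norm (d1 u') \<le> 3 * G^4 * norm f"
    and m4: "norm s' \<le> 2 * G^4 * norm f" and m5: "norm u' \<le> 11 * G^9 * norm f"
  shows "sqrt ((norm (s - s'))^2 + (norm (d0 (s - s')))^2) + sqrt ((norm (u - u'))^2 + (norm (d1 (u - u')))^2)
         + norm (p - p') \<le> 120 * G^11 * (norm (fh - g) + \<eta> * norm f)"
proof -
  define F where "F = norm f"
  define \<delta> where "\<delta> = norm (fh - g)"
  define T where "T = \<delta> + \<eta> * F"
  have F0: "0 \<le> F" unfolding F_def by simp
  have d0': "0 \<le> \<delta>" unfolding \<delta>_def by simp
  have G0: "0 \<le> G" using G1 by simp
  have eF: "\<eta> * F \<le> T" unfolding T_def using d0' by simp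
  have dT: "\<delta> \<le> T" unfolding T_def using eta_nn F0 by simp
  have T0: "0 \<le> T" using dT d0' by simp
  have GT: "T \<le> G * T" using G1 T0 by (simp add: mult_right_mono[of 1 G T, simplified])
  have pw: "\<And>k m. k \<le> m \<Longrightarrow> G^k * T \<le> G^m * T" using powmono[OF G1 _ T0] by blast
  have pw1: "G * T \<le> G^m * T" if "1 \<le> m" for m using pw[OF that] by simp
  have aT: "\<eta> * n \<le> A * T" if "n \<le> A * F" "0 \<le> A" for n A
  proof -
    have "\<eta> * n \<le> A * (\<eta> * F)" by (rule etaF[OF that(1) eta_nn])
    also have "\<dots> \<le> A * T" using eF that(2) by (rule mult_left_mono)
    finally show ?thesis .
  qed
  have hds: "\<eta> * norm (d0 s') \<le> G * T" using aT[of _ G] m1 G0 unfolding F_def by simp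
  have hp: "\<eta> * norm p' \<le> G * T" using aT[of _ G] m2 G0 unfolding F_def by simp
  have hdu: "\<eta> * norm (d1 u') \<le> 3 * G^4 * T" using aT[of _ "3 * G^4"] m3 G0 unfolding F_def by simp
  have hs: "\<eta> * norm s' \<le> 2 * G^4 * T" using aT[of _ "2 * G^4"] m4 G0 unfolding F_def by simp
  have hu: "\<eta> * norm u' \<le> 11 * G^9 * T" using aT[of _ "11 * G^9"] m5 G0 unfolding F_def by simp
  have fg: "inner (fh - g) v \<le> T * norm v" for v
    using csX(1)[of "fh - g" T v] dT unfolding \<delta>_def by simp
  have i2_0: "i2 0 = 0" by (rule lin_on_0[OF sub(3) ilin(3)])
  have i1_0: "i1 0 = 0" by (rule lin_on_0[OF sub(2) ilin(2)])
  have ds'V: "d0 s' \<in> V1" using dV(1)[OF mS(1)] .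
  have dsV: "d0 s \<in> V1" using dV(1)[OF oS(1)] .
  have du'V: "d1 u' \<in> V2" using dV(2)[OF mS(2)] .
  have gv: "inner (fh - g) v = inner fh v - inner f (i1 v)" if "v \<in> V1" for v
    using gf[OF that] by (simp add: inner_diff_left)
  define se where "se = s - s'"
  have seV: "se \<in> V0" unfolding se_def using sub(1) oS(1) mS(1) subspace_diff by blast
  define b where "b = d0 s - d0 s'"
  have bse: "b = d0 se" unfolding b_def se_def by (rule lin_on_diff[OF sub(1) dlin(1) oS(1) mS(1), symmetric])
  have bV: "b \<in> V1" using dV(1)[OF seV] bse by simp
  have db: "d1 b = 0" using dd[OF seV] bse by simp
  have "norm b * norm b \<le> (2 * G * T) * norm b"
  proof -
    have o: "inner (d0 s) b + inner (d1 u) (d1 b) + inner p b = inner fh b" by (rule oe2[OF bV])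
    have m: "inner (i1 (d0 s')) (i1 b) + inner (i2 (d1 u')) (i2 (d1 b)) + inner (i1 p') (i1 b) = inner f (i1 b)"
      by (rule me2[OF bV])
    have pb: "inner p b = 0" using oS(5)[OF seV] bse by simp
    have p'b: "inner (i1 p') (i1 b) = 0" using mS(5)[OF seV] bse by simp
    have eq: "norm b * norm b = inner (fh - g) b + (inner (i1 (d0 s')) (i1 b) - inner (d0 s') b)"
      using o m pb p'b db i2_0 gv[OF bV] unfolding nn by (simp add: b_def inner_diff_left)
    have t2: "inner (i1 (d0 s')) (i1 b) - inner (d0 s') b \<le> G * T * norm b"
      using etaX(2)[OF eta1[OF ds'V bV] hds norm_ge_zero] by simp
    have "T * norm b \<le> G * T * norm b" using mult_right_mono[OF GT norm_ge_zero] .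
    then show ?thesis using eq fg[of b] t2 by (simp add: algebra_simps)
  qed
  then have nb: "norm b \<le> 2 * G * T" by (rule quad_le[rotated, OF _ norm_ge_zero]) (use G0 T0 in simp)
  define r where "r = p - p'"
  have rV: "r \<in> V1" unfolding r_def using sub(2) oS(3) mS(3) subspace_diff by blast
  have dr: "d1 r = 0" unfolding r_def using lin_on_diff[OF sub(2) dlin(2) oS(3) mS(3)] oS(4) mS(4) by simp
  have "norm r * norm r \<le> (5 * G * T) * norm r"
  proof -
    have o: "inner (d0 s) r + inner (d1 u) (d1 r) + inner p r = inner fh r" by (rule oe2[OF rV])
    have m: "inner (i1 (d0 s')) (i1 r) + inner (i2 (d1 u')) (i2 (d1 r)) + inner (i1 p') (i1 r) = inner f (i1 r)"
      by (rule me2[OF rV])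
    have eq: "norm r * norm r = inner (fh - g) r - inner b r + (inner (i1 (d0 s')) (i1 r) - inner (d0 s') r)
       + (inner (i1 p') (i1 r) - inner p' r)"
      using o m dr i2_0 gv[OF rV] unfolding nn by (simp add: b_def r_def inner_diff_left inner_diff_right)
    have t2: "- inner b r \<le> 2 * G * T * norm r" using csX(2)[OF nb] .
    have t3: "inner (i1 (d0 s')) (i1 r) - inner (d0 s') r \<le> G * T * norm r"
      using etaX(2)[OF eta1[OF ds'V rV] hds norm_ge_zero] by simp
    have t4: "inner (i1 p') (i1 r) - inner p' r \<le> G * T * norm r"
      using etaX(2)[OF eta1[OF mS(3) rV] hp norm_ge_zero] by simp
    have "T * norm r \<le> G * T * norm r" using mult_right_mono[OF GT norm_ge_zero] .
    then show ?thesis using eq fg[of r] t2 t3 t4 by (simp add: algebra_simps)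
  qed
  then have nr: "norm r \<le> 5 * G * T" by (rule quad_le[rotated, OF _ norm_ge_zero]) (use G0 T0 in simp)
  define w where "w = u - u'"
  have wV: "w \<in> V1" unfolding w_def using sub(2) oS(2) mS(2) subspace_diff by blast
  have dw: "d1 w = d1 u - d1 u'" unfolding w_def by (rule lin_on_diff[OF sub(2) dlin(2) oS(2) mS(2)])
  obtain z where z: "z \<in> V1" "d1 z = 0" "norm (w - z) \<le> G * norm (d1 w)" using DP1[OF wV] by blast
  define x where "x = w - z"
  have xV: "x \<in> V1" unfolding x_def using sub(2) wV z(1) subspace_diff by blast
  have dx: "d1 x = d1 w" unfolding x_def using lin_on_diff[OF sub(2) dlin(2) wV z(1)] z(2) by simp
  have nx: "norm x \<le> G * norm (d1 w)" using z(3) unfolding x_def .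
  have dwV: "d1 w \<in> V2" using dV(2)[OF wV] .
  have "norm (d1 w) * norm (d1 w) \<le> (13 * G^4 * T) * norm (d1 w)"
  proof -
    have o: "inner (d0 s) x + inner (d1 u) (d1 x) + inner p x = inner fh x" by (rule oe2[OF xV])
    have m: "inner (i1 (d0 s')) (i1 x) + inner (i2 (d1 u')) (i2 (d1 x)) + inner (i1 p') (i1 x) = inner f (i1 x)"
      by (rule me2[OF xV])
    have eq: "norm (d1 w) * norm (d1 w) = inner (fh - g) x - inner b x - inner r x
       + (inner (i1 (d0 s')) (i1 x) - inner (d0 s') x) + (inner (i1 p') (i1 x) - inner p' x)
       + (inner (i2 (d1 u')) (i2 (d1 w)) - inner (d1 u') (d1 w))"
      using o m gv[OF xV] unfolding nn dx by (simp add: dw b_def r_def inner_diff_left inner_diff_right)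
    have t1: "inner (fh - g) x \<le> T * norm x" by (rule fg)
    have t2: "- inner b x \<le> 2 * G * T * norm x" using csX(2)[OF nb] .
    have t3: "- inner r x \<le> 5 * G * T * norm x" using csX(2)[OF nr] .
    have t4: "inner (i1 (d0 s')) (i1 x) - inner (d0 s') x \<le> G * T * norm x"
      using etaX(2)[OF eta1[OF ds'V xV] hds norm_ge_zero] by simp
    have t5: "inner (i1 p') (i1 x) - inner p' x \<le> G * T * norm x"
      using etaX(2)[OF eta1[OF mS(3) xV] hp norm_ge_zero] by simp
    have t6: "inner (i2 (d1 u')) (i2 (d1 w)) - inner (d1 u') (d1 w) \<le> 3 * G^4 * T * norm (d1 w)"
      using etaX(2)[OF eta2[OF du'V dwV] hdu norm_ge_zero] by simp
    have "T * norm x \<le> G * T * norm x" using mult_right_mono[OF GT norm_ge_zero] .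
    then have "norm (d1 w) * norm (d1 w) \<le> (10 * G * T) * norm x + 3 * G^4 * T * norm (d1 w)"
      using eq t1 t2 t3 t4 t5 t6 by (simp add: algebra_simps)
    also have "(10 * G * T) * norm x \<le> (10 * G * T) * (G * norm (d1 w))"
      using nx G0 T0 by (intro mult_left_mono) auto
    also have "(10 * G * T) * (G * norm (d1 w)) = 10 * (G^2 * T) * norm (d1 w)" by (simp add: power2_eq_square)
    also have "10 * (G^2 * T) * norm (d1 w) \<le> 10 * (G^4 * T) * norm (d1 w)"
      using pw[of 2 4] by (intro mult_right_mono) auto
    finally show ?thesis by (simp add: algebra_simps)
  qed
  then have ndw: "norm (d1 w) \<le> 13 * G^4 * T" by (rule quad_le[rotated, OF _ norm_ge_zero]) (use G0 T0 in simp)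
  obtain \<zeta> where \<zeta>: "\<zeta> \<in> V0" "d0 \<zeta> = 0" "norm (se - \<zeta>) \<le> G * norm (d0 se)" using DP0[OF seV] by blast
  have nsz: "norm (se - \<zeta>) \<le> 2 * G^2 * T"
  proof -
    have "norm (se - \<zeta>) \<le> G * (2 * G * T)" using \<zeta>(3) bse nb G0 by (metis mult_left_mono order_trans)
    then show ?thesis by (simp add: power2_eq_square algebra_simps)
  qed
  have "norm \<zeta> * norm \<zeta> \<le> (4 * G^4 * T) * norm \<zeta>"
  proof -
    have o: "inner s \<zeta> = 0" using oe1[OF \<zeta>(1)] \<zeta>(2) lin_on_0[OF sub(1) dlin(1)] by simp
    have m: "inner (i0 s') (i0 \<zeta>) = 0" using me1[OF \<zeta>(1)] \<zeta>(2) i1_0 by simp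
    have eq: "norm \<zeta> * norm \<zeta> = (inner (i0 s') (i0 \<zeta>) - inner s' \<zeta>) - inner (se - \<zeta>) \<zeta>"
      using o m unfolding nn by (simp add: se_def inner_diff_left)
    have t1: "inner (i0 s') (i0 \<zeta>) - inner s' \<zeta> \<le> 2 * G^4 * T * norm \<zeta>"
      using etaX(2)[OF eta0[OF mS(1) \<zeta>(1)] hs norm_ge_zero] by simp
    have t2: "- inner (se - \<zeta>) \<zeta> \<le> 2 * G^2 * T * norm \<zeta>" using csX(2)[OF nsz] .
    have "2 * (G^2 * T) * norm \<zeta> \<le> 2 * (G^4 * T) * norm \<zeta>" using pw[of 2 4] by (intro mult_right_mono) auto
    then show ?thesis using eq t1 t2 by (simp add: algebra_simps)
  qed
  then have nz: "norm \<zeta> \<le> 4 * G^4 * T" by (rule quad_le[rotated, OF _ norm_ge_zero]) (use G0 T0 in simp)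
  have nse: "norm se \<le> 6 * G^4 * T"
  proof -
    have "norm se \<le> norm (se - \<zeta>) + norm \<zeta>" by (metis diff_add_cancel norm_triangle_ineq)
    moreover have "2 * (G^2 * T) \<le> 2 * (G^4 * T)" using pw[of 2 4] by simp
    ultimately show ?thesis using nsz nz by (simp add: algebra_simps)
  qed
  have liftB: "\<exists>\<tau>0\<in>V0. d0 \<tau>0 = \<beta> \<and> norm \<tau>0 \<le> G * norm \<beta>" if \<beta>in: "\<beta> \<in> d0 ` V0" for \<beta>
  proof -
    obtain \<tau> where \<tau>: "\<tau> \<in> V0" "\<beta> = d0 \<tau>" using \<beta>in by blast
    obtain \<zeta>0 where \<zeta>0: "\<zeta>0 \<in> V0" "d0 \<zeta>0 = 0" "norm (\<tau> - \<zeta>0) \<le> G * norm (d0 \<tau>)" using DP0[OF \<tau>(1)] by blast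
    have "\<tau> - \<zeta>0 \<in> V0" using sub(1) \<tau>(1) \<zeta>0(1) subspace_diff by blast
    moreover have "d0 (\<tau> - \<zeta>0) = \<beta>" using lin_on_diff[OF sub(1) dlin(1) \<tau>(1) \<zeta>0(1)] \<zeta>0(2) \<tau>(2) by simp
    ultimately show ?thesis using \<zeta>0(3) \<tau>(2) by (intro bexI[of _ "\<tau> - \<zeta>0"]) simp_all
  qed
  have nx2: "norm x \<le> 13 * G^5 * T"
  proof -
    have "norm x \<le> G * (13 * G^4 * T)" using nx ndw G0 by (metis mult_left_mono order_trans)
    then show ?thesis by (simp add: eval_nat_numeral algebra_simps)
  qed
  obtain zB where zBB: "zB \<in> d0 ` V0" and zBp: "\<forall>b\<in>d0 ` V0. inner (z - zB) b = 0" using proj[OF z(1)] by blast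
  obtain \<tau>0 where \<tau>0: "\<tau>0 \<in> V0" "d0 \<tau>0 = zB" "norm \<tau>0 \<le> G * norm zB" using liftB[OF zBB] by blast
  have zBV: "zB \<in> V1" using dV(1)[OF \<tau>0(1)] \<tau>0(2) by simp
  have dzB: "d1 zB = 0" using dd[OF \<tau>0(1)] \<tau>0(2) by simp
  define zH where "zH = z - zB"
  have zHV: "zH \<in> V1" unfolding zH_def using sub(2) z(1) zBV subspace_diff by blast
  have dzH: "d1 zH = 0" unfolding zH_def using lin_on_diff[OF sub(2) dlin(2) z(1) zBV] z(2) dzB by simp
  have zHperp: "inner zH b = 0" if "b \<in> d0 ` V0" for b using zBp that unfolding zH_def by blast
  have uzH: "inner u zH = 0" using oe3[OF zHV dzH] zHperp by blast
  have zBzH: "inner zB zH = 0" using zHperp[OF zBB] by (simp add: inner_commute)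
  have wdec: "w = x + zB + zH" unfolding x_def zH_def by simp
  obtain \<beta> where \<beta>B: "\<beta> \<in> d0 ` V0" and \<beta>p: "\<forall>b\<in>d0 ` V0. inner (i1 zH - i1 \<beta>) (i1 b) = 0"
    using Jproj[OF zHV] by blast
  obtain \<tau>1 where \<tau>1: "\<tau>1 \<in> V0" "d0 \<tau>1 = \<beta>" using \<beta>B by blast
  have \<beta>V: "\<beta> \<in> V1" using dV(1)[OF \<tau>1(1)] \<tau>1(2) by simp
  have d\<beta>: "d1 \<beta> = 0" using dd[OF \<tau>1(1)] \<tau>1(2) by simp
  define q' where "q' = zH - \<beta>"
  have q'V: "q' \<in> V1" unfolding q'_def using sub(2) zHV \<beta>V subspace_diff by blast
  have iq': "i1 q' = i1 zH - i1 \<beta>" unfolding q'_def by (rule lin_on_diff[OF sub(2) ilin(2) zHV \<beta>V])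
  have dq': "d1 q' = 0" unfolding q'_def using lin_on_diff[OF sub(2) dlin(2) zHV \<beta>V] dzH d\<beta> by simp
  have q'H: "\<forall>b\<in>V0. inner (i1 q') (i1 (d0 b)) = 0" using \<beta>p unfolding iq' by blast
  have uq: "inner (i1 u') (i1 q') = 0" by (rule me3[OF q'V dq' q'H])
  have ib\<beta>: "inner (i1 \<beta>) (i1 \<beta>) = inner (i1 zH) (i1 \<beta>)"
  proof -
    have "inner (i1 zH - i1 \<beta>) (i1 \<beta>) = 0" using \<beta>p \<beta>B by blast
    then show ?thesis by (simp add: inner_diff_left)
  qed
  have zH\<beta>: "inner zH \<beta> = 0" by (rule zHperp[OF \<beta>B])
  have ncb: "norm \<beta> \<le> G * norm (i1 \<beta>)" by (rule cyc1[OF \<beta>V d\<beta>])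
  have "norm (i1 \<beta>) * norm (i1 \<beta>) \<le> (G * norm zH) * norm (i1 \<beta>)"
  proof -
    have "norm (i1 \<beta>) * norm (i1 \<beta>) = inner (i1 zH) (i1 \<beta>)" unfolding nn ib\<beta> ..
    also have "\<dots> \<le> (G * norm zH) * norm (i1 \<beta>)" by (rule csX(1)[OF ib1[OF zHV]])
    finally show ?thesis .
  qed
  then have nib1: "norm (i1 \<beta>) \<le> G * norm zH" by (rule quad_le[rotated, OF _ norm_ge_zero]) (use G0 in simp)
  have nbeta1: "norm \<beta> \<le> G^2 * norm zH"
  proof -
    have "norm \<beta> \<le> G * (G * norm zH)" using ncb nib1 G0 by (metis mult_left_mono order_trans)
    then show ?thesis by (simp add: power2_eq_square algebra_simps)
  qed
  have "norm (i1 \<beta>) * norm (i1 \<beta>) \<le> (G * (\<eta> * norm zH)) * norm (i1 \<beta>)"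
  proof -
    have "norm (i1 \<beta>) * norm (i1 \<beta>) = inner (i1 zH) (i1 \<beta>) - inner zH \<beta>" unfolding nn ib\<beta> zH\<beta> by simp
    also have "\<dots> \<le> \<eta> * norm zH * norm \<beta>" using eta1[OF zHV \<beta>V] by linarith
    also have "\<dots> \<le> \<eta> * norm zH * (G * norm (i1 \<beta>))" using ncb eta_nn by (intro mult_left_mono) auto
    also have "\<dots> = (G * (\<eta> * norm zH)) * norm (i1 \<beta>)" by (simp add: algebra_simps)
    finally show ?thesis .
  qed
  then have nib2: "norm (i1 \<beta>) \<le> G * (\<eta> * norm zH)"
    by (rule quad_le[rotated, OF _ norm_ge_zero]) (use G0 eta_nn in simp)
  have nbeta2: "norm \<beta> \<le> G^2 * (\<eta> * norm zH)"
  proof -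
    have "norm \<beta> \<le> G * (G * (\<eta> * norm zH))" using ncb nib2 G0 by (metis mult_left_mono order_trans)
    then show ?thesis by (simp add: power2_eq_square algebra_simps)
  qed
  have nq': "norm q' \<le> 2 * G^2 * norm zH"
  proof -
    have "norm q' \<le> norm zH + norm \<beta>" unfolding q'_def by (rule norm_triangle_ineq4)
    moreover have "norm zH \<le> G^2 * norm zH" using powmono[OF G1, of 0 2 "norm zH"] by simp
    ultimately show ?thesis using nbeta1 by simp
  qed
  have uzH': "- inner u' zH \<le> 33 * G^11 * T * norm zH"
  proof -
    have dec: "inner u' zH = (inner u' q' - inner (i1 u') (i1 q')) + inner u' \<beta>"
      using uq unfolding q'_def by (simp add: inner_diff_right)
    have a1: "\<eta> * norm u' * norm q' \<le> (11 * G^9 * T) * (2 * G^2 * norm zH)"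
      using mult_mono[OF hu nq'] G0 T0 by simp
    have a2: "norm u' * norm \<beta> \<le> norm u' * (G^2 * (\<eta> * norm zH))"
      using nbeta2 by (intro mult_left_mono) auto
    have a3: "norm u' * (G^2 * (\<eta> * norm zH)) = G^2 * (\<eta> * norm u') * norm zH" by (simp add: algebra_simps)
    have a4: "G^2 * (\<eta> * norm u') * norm zH \<le> G^2 * (11 * G^9 * T) * norm zH"
      using hu G0 by (intro mult_right_mono mult_left_mono) auto
    have b1: "- (inner u' q' - inner (i1 u') (i1 q')) \<le> \<eta> * norm u' * norm q'"
      using eta1[OF mS(2) q'V] by linarith
    have b2: "- inner u' \<beta> \<le> norm u' * norm \<beta>" by (rule cs2)
    have "- inner u' zH \<le> (11 * G^9 * T) * (2 * G^2 * norm zH) + G^2 * (11 * G^9 * T) * norm zH"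
      using dec a1 a2 a3 a4 b1 b2 by linarith
    also have "\<dots> = 33 * G^11 * T * norm zH" by (simp add: eval_nat_numeral algebra_simps)
    finally show ?thesis .
  qed
  have "norm zH * norm zH \<le> (46 * G^11 * T) * norm zH"
  proof -
    have eq: "norm zH * norm zH = - inner u' zH - inner x zH"
    proof -
      have "inner zH zH = inner w zH - inner x zH - inner zB zH" unfolding wdec by (simp add: inner_add_left)
      moreover have "inner w zH = - inner u' zH" unfolding w_def using uzH by (simp add: inner_diff_left)
      ultimately show ?thesis unfolding nn using zBzH by simp
    qed
    have t2: "- inner x zH \<le> 13 * G^5 * T * norm zH" using csX(2)[OF nx2] .
    have "13 * (G^5 * T) * norm zH \<le> 13 * (G^11 * T) * norm zH" using pw[of 5 11] by (intro mult_right_mono) auto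
    then show ?thesis using eq uzH' t2 by (simp add: algebra_simps)
  qed
  then have nzH: "norm zH \<le> 46 * G^11 * T" by (rule quad_le[rotated, OF _ norm_ge_zero]) (use G0 T0 in simp)
  have "norm zB * norm zB \<le> (32 * G^9 * T) * norm zB"
  proof -
    have o: "inner s \<tau>0 - inner u zB = 0" using oe1[OF \<tau>0(1)] \<tau>0(2) by simp
    have m: "inner (i0 s') (i0 \<tau>0) - inner (i1 u') (i1 zB) = 0" using me1[OF \<tau>0(1)] \<tau>0(2) by simp
    have eq: "norm zB * norm zB = inner se \<tau>0 + (inner s' \<tau>0 - inner (i0 s') (i0 \<tau>0))
          + (inner (i1 u') (i1 zB) - inner u' zB) - inner x zB"
    proof -
      have "inner zB zB = inner w zB - inner x zB - inner zH zB" unfolding wdec by (simp add: inner_add_left)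
      moreover have "inner zH zB = 0" using zBzH by (simp add: inner_commute)
      moreover have "inner w zB = inner u zB - inner u' zB" unfolding w_def by (simp add: inner_diff_left)
      ultimately show ?thesis unfolding nn using o m by (simp add: se_def inner_diff_left)
    qed
    have t1: "inner se \<tau>0 \<le> 6 * G^4 * T * norm \<tau>0" using csX(1)[OF nse] .
    have t2: "inner s' \<tau>0 - inner (i0 s') (i0 \<tau>0) \<le> 2 * G^4 * T * norm \<tau>0"
      using etaX(1)[OF eta0[OF mS(1) \<tau>0(1)] hs norm_ge_zero] by simp
    have t3: "inner (i1 u') (i1 zB) - inner u' zB \<le> 11 * G^9 * T * norm zB"
      using etaX(2)[OF eta1[OF mS(2) zBV] hu norm_ge_zero] by simp
    have t4: "- inner x zB \<le> 13 * G^5 * T * norm zB" using csX(2)[OF nx2] .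
    have t5: "8 * G^4 * T * norm \<tau>0 \<le> 8 * G^4 * T * (G * norm zB)"
      using \<tau>0(3) G0 T0 by (intro mult_left_mono) auto
    have t6: "8 * G^4 * T * (G * norm zB) = 8 * G^5 * T * norm zB" by (simp add: eval_nat_numeral algebra_simps)
    have t7: "8 * G^5 * T * norm zB \<le> 8 * G^9 * T * norm zB" by (rule pmono[OF G1 _ T0]) auto
    have t8: "13 * G^5 * T * norm zB \<le> 13 * G^9 * T * norm zB" by (rule pmono[OF G1 _ T0]) auto
    have "norm zB * norm zB \<le> 8 * G^4 * T * norm \<tau>0 + 11 * G^9 * T * norm zB + 13 * G^5 * T * norm zB"
      using eq t1 t2 t3 t4 by (simp add: algebra_simps)
    then have "norm zB * norm zB \<le> 8 * G^9 * T * norm zB + 11 * G^9 * T * norm zB + 13 * G^9 * T * norm zB"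
      using t5 t6 t7 t8 by linarith
    then show ?thesis by (simp add: algebra_simps)
  qed
  then have nzB: "norm zB \<le> 32 * G^9 * T" by (rule quad_le[rotated, OF _ norm_ge_zero]) (use G0 T0 in simp)
  have nw: "norm w \<le> 91 * G^11 * T"
  proof -
    have "norm w \<le> norm x + norm zB + norm zH" unfolding wdec by (metis norm_triangle_ineq order_trans add_right_mono)
    moreover have "13 * (G^5 * T) \<le> 13 * (G^11 * T)" using pw[of 5 11] by simp
    moreover have "32 * (G^9 * T) \<le> 32 * (G^11 * T)" using pw[of 9 11] by simp
    ultimately show ?thesis using nx2 nzB nzH by (simp add: algebra_simps)
  qed
  have f1: "sqrt ((norm (s - s'))^2 + (norm (d0 (s - s')))^2) \<le> 6 * G^4 * T + 2 * G * T"
  proof -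
    have "norm (d0 (s - s')) \<le> 2 * G * T" using nb bse unfolding se_def by simp
    then show ?thesis using sqrt_sum_squares_le_sum[OF norm_ge_zero norm_ge_zero, of "s - s'" "d0 (s - s')"] nse
      unfolding se_def by linarith
  qed
  have f2: "sqrt ((norm (u - u'))^2 + (norm (d1 (u - u')))^2) \<le> 91 * G^11 * T + 13 * G^4 * T"
    using sqrt_sum_squares_le_sum[OF norm_ge_zero norm_ge_zero, of w "d1 w"] nw ndw
    unfolding w_def by linarith
  have a1: "6 * G^4 * T \<le> 6 * G^11 * T" by (rule pmono2[OF G1 _ T0]) auto
  have a2: "2 * G * T \<le> 2 * G^11 * T" using pmono2[OF G1 _ T0, of 1 11 2] by simp
  have a3: "13 * G^4 * T \<le> 13 * G^11 * T" by (rule pmono2[OF G1 _ T0]) auto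
  have a4: "5 * G * T \<le> 5 * G^11 * T" using pmono2[OF G1 _ T0, of 1 11 5] by simp
  have a5: "6 * G^11 * T + 2 * G^11 * T + 91 * G^11 * T + 13 * G^11 * T + 5 * G^11 * T = 117 * G^11 * T"
    by (simp add: algebra_simps)
  have a6: "117 * G^11 * T \<le> 120 * G^11 * T" using G0 T0 by (intro mult_right_mono) auto
  have "sqrt ((norm (s - s'))^2 + (norm (d0 (s - s')))^2) + sqrt ((norm (u - u'))^2 + (norm (d1 (u - u')))^2)
         + norm (p - p') \<le> 120 * G^11 * T"
    using f1 f2 nr a1 a2 a3 a4 a5 a6 unfolding r_def by linarith
  then show ?thesis unfolding T_def \<delta>_def F_def .
qed

lemma lin_on_subset: "lin_on S f \<Longrightarrow> T \<subseteq> S \<Longrightarrow> lin_on T f"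
  unfolding lin_on_def by blast

lemma hadj_eq:
  fixes T :: "'v::{real_inner,complete_space} set" and g :: "'v \<Rightarrow> 'w::real_inner"
  assumes sub: "subspace T" and cl: "closed T" and lin: "lin_on T g"
    and bdd: "\<forall>x\<in>T. norm (g x) \<le> K * norm x"
    and y: "y \<in> T" "\<And>x. x \<in> T \<Longrightarrow> inner y x = inner w (g x)"
  shows "hadj T g w = y"
proof -
  have h: "hadj T g w \<in> T" "\<And>x. x \<in> T \<Longrightarrow> inner (hadj T g w) x = inner w (g x)"
    using hadj_props[OF sub cl lin bdd] by auto
  have dT: "hadj T g w - y \<in> T" using h(1) y(1) sub subspace_diff by blast
  have "inner (hadj T g w - y) (hadj T g w - y) = 0"
    using h(2)[OF dT] y(2)[OF dT] by (simp add: inner_diff_left)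
  then show ?thesis by simp
qed

lemma Jop_props:
  fixes Wh :: "int \<Rightarrow> 'v::{real_inner,complete_space} set" and i :: "int \<Rightarrow> 'v \<Rightarrow> 'w::real_inner"
  assumes sub: "subspace (Wh j)" and cl: "closed (Wh j)" and lin: "lin_on (Wh j) (i j)"
    and bdd: "\<forall>x\<in>Wh j. norm (i j x) \<le> K * norm x" and K0: "0 \<le> K"
  shows "\<And>x. Jop Wh i j x \<in> Wh j"
    and "\<And>x y. y \<in> Wh j \<Longrightarrow> inner (Jop Wh i j x) y = inner (i j x) (i j y)"
    and "\<And>x c. x \<in> Wh j \<Longrightarrow> Jop Wh i j (c *\<^sub>R x) = c *\<^sub>R Jop Wh i j x"
    and "\<And>x. x \<in> Wh j \<Longrightarrow> norm (Jop Wh i j x) \<le> K^2 * norm x"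
proof -
  note hp = hadj_props[OF sub cl lin bdd]
  show J1: "\<And>x. Jop Wh i j x \<in> Wh j" unfolding Jop_def by (rule hp(1))
  show J2: "\<And>x y. y \<in> Wh j \<Longrightarrow> inner (Jop Wh i j x) y = inner (i j x) (i j y)" unfolding Jop_def by (rule hp(2))
  show "Jop Wh i j (c *\<^sub>R x) = c *\<^sub>R Jop Wh i j x" if x: "x \<in> Wh j" for x c
  proof -
    have "hadj (Wh j) (i j) (i j (c *\<^sub>R x)) = c *\<^sub>R Jop Wh i j x"
    proof (rule hadj_eq[OF sub cl lin bdd])
      show "c *\<^sub>R Jop Wh i j x \<in> Wh j" using J1 sub subspace_scale by blast
      fix y assume "y \<in> Wh j"
      then show "inner (c *\<^sub>R Jop Wh i j x) y = inner (i j (c *\<^sub>R x)) (i j y)"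
        using J2 lin_on_scale[OF lin x] by simp
    qed
    then show ?thesis unfolding Jop_def .
  qed
  show "norm (Jop Wh i j x) \<le> K^2 * norm x" if x: "x \<in> Wh j" for x
  proof -
    have "norm (Jop Wh i j x) * norm (Jop Wh i j x) = inner (i j x) (i j (Jop Wh i j x))"
      unfolding nn using J2[OF J1] .
    also have "\<dots> \<le> norm (i j x) * norm (i j (Jop Wh i j x))" by (rule cs1)
    also have "\<dots> \<le> (K * norm x) * (K * norm (Jop Wh i j x))"
      using bdd x J1 K0 by (intro mult_mono) auto
    also have "\<dots> = (K^2 * norm x) * norm (Jop Wh i j x)" by (simp add: power2_eq_square algebra_simps)
    finally show ?thesis by (rule quad_le[rotated, OF _ norm_ge_zero]) (use K0 in simp)
  qed
qed

lemma opnorm_le: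
  fixes T :: "'a::real_normed_vector set" and f :: "'a \<Rightarrow> 'b::real_normed_vector"
  assumes sub: "subspace T" and sc: "\<And>x c. x \<in> T \<Longrightarrow> f (c *\<^sub>R x) = c *\<^sub>R f x"
    and bdd: "\<And>x. x \<in> T \<Longrightarrow> norm (f x) \<le> B * norm x"
  shows "\<And>x. x \<in> T \<Longrightarrow> norm (f x) \<le> opnorm_on T f * norm x" and "0 \<le> opnorm_on T f"
proof -
  define S where "S = {x\<in>T. norm x \<le> 1}"
  have 0: "0 \<in> T" using subspace_0[OF sub] .
  have f0: "f 0 = 0" using sc[OF 0, of 0] by simp
  have bd: "bdd_above ((\<lambda>x. norm (f x)) ` S)"
  proof (rule bdd_aboveI2)
    fix x assume "x \<in> S"
    then have "x \<in> T" "norm x \<le> 1" unfolding S_def by auto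
    then have "norm (f x) \<le> B * norm x" using bdd by blast
    also have "\<dots> \<le> \<bar>B\<bar> * norm x" by (intro mult_right_mono) auto
    also have "\<dots> \<le> \<bar>B\<bar>" using \<open>norm x \<le> 1\<close> by (simp add: mult_left_le)
    finally show "norm (f x) \<le> \<bar>B\<bar>" .
  qed
  have up: "norm (f x) \<le> opnorm_on T f" if "x \<in> S" for x
    unfolding opnorm_on_def S_def[symmetric] using cSUP_upper[OF that bd] .
  show "0 \<le> opnorm_on T f" using up[of 0] 0 f0 unfolding S_def by simp
  show "norm (f x) \<le> opnorm_on T f * norm x" if x: "x \<in> T" for x
  proof (cases "x = 0")
    case True then show ?thesis using f0 by simp
  next
    case False
    define y where "y = (1 / norm x) *\<^sub>R x"
    have yS: "y \<in> S" unfolding S_def y_def using x sub subspace_scale False by auto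
    have "norm (f y) = norm (f x) / norm x" unfolding y_def using sc[OF x] by simp
    then have "norm (f x) / norm x \<le> opnorm_on T f" using up[OF yS] by simp
    then show ?thesis using False by (simp add: divide_le_eq)
  qed
qed


lemma closed_image_coercive:
  fixes B :: "'v::{real_inner,complete_space} set" and g :: "'v \<Rightarrow> 'w::real_inner"
  assumes cl: "closed B" and sub: "subspace B" and lin: "lin_on B g" and cont: "continuous_on B g"
    and co: "\<And>x. x \<in> B \<Longrightarrow> norm x \<le> K * norm (g x)"
  shows "closed (g ` B)"
  unfolding closed_sequential_limits
proof (intro allI impI, elim conjE)
  fix y :: "nat \<Rightarrow> 'w" and l assume yB: "\<forall>n. y n \<in> g ` B" and yl: "y \<longlonglongrightarrow> l"
  obtain b where b: "\<And>n. b n \<in> B" "\<And>n. y n = g (b n)"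
  proof -
    have "\<forall>n. \<exists>x. x \<in> B \<and> y n = g x" using yB by blast
    then obtain b where "\<forall>n. b n \<in> B \<and> y n = g (b n)" by metis
    then show ?thesis using that by blast
  qed
  define K' where "K' = \<bar>K\<bar> + 1"
  have K'0: "K' > 0" unfolding K'_def by simp
  have cy: "Cauchy y" using yl by (rule LIMSEQ_imp_Cauchy)
  have "Cauchy b"
  proof (rule CauchyI)
    fix e :: real assume e: "e > 0"
    obtain M where M: "\<forall>m\<ge>M. \<forall>n\<ge>M. norm (y m - y n) < e / K'" using CauchyD[OF cy, of "e / K'"] e K'0 by auto
    show "\<exists>M. \<forall>m\<ge>M. \<forall>n\<ge>M. norm (b m - b n) < e"
    proof (intro exI[of _ M] allI impI)
      fix m n assume m: "m \<ge> M" and n: "n \<ge> M"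
      have bd: "b m - b n \<in> B" using b(1) sub subspace_diff by blast
      have gd: "g (b m - b n) = y m - y n" using lin_on_diff[OF sub lin b(1) b(1)] b(2) by simp
      have "norm (b m - b n) \<le> K * norm (y m - y n)" using co[OF bd] gd by simp
      also have "\<dots> \<le> K' * norm (y m - y n)" unfolding K'_def by (intro mult_right_mono) auto
      also have "\<dots> < K' * (e / K')" using M m n K'0 by (intro mult_strict_left_mono) auto
      also have "\<dots> = e" using K'0 by simp
      finally show "norm (b m - b n) < e" .
    qed
  qed
  then obtain x where bx: "b \<longlonglongrightarrow> x" using convergent_eq_Cauchy by blast
  have xB: "x \<in> B" using closed_sequentially[OF cl] b(1) bx by blast
  have "(g \<circ> b) \<longlonglongrightarrow> g x"
    using cont xB b(1) bx unfolding continuous_on_sequentially by blast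
  then have "(\<lambda>n. g (b n)) \<longlonglongrightarrow> g x" by (simp add: o_def)
  moreover have "y = (\<lambda>n. g (b n))" using b(2) by (intro ext) simp
  ultimately have "y \<longlonglongrightarrow> g x" by simp
  then have "l = g x" using yl LIMSEQ_unique by blast
  then show "l \<in> g ` B" using xB by blast
qed

lemma Jop_eta:
  fixes Wh :: "int \<Rightarrow> 'v::{real_inner,complete_space} set" and i :: "int \<Rightarrow> 'v \<Rightarrow> 'w::real_inner"
  assumes sub: "subspace (Wh j)" and cl: "closed (Wh j)" and lin: "lin_on (Wh j) (i j)"
    and bdd: "\<forall>x\<in>Wh j. norm (i j x) \<le> K * norm x" and K0: "0 \<le> K"
    and x: "x \<in> Wh j" and y: "y \<in> Wh j"
  shows "\<bar>inner x y - inner (i j x) (i j y)\<bar> \<le> opnorm_on (Wh j) (\<lambda>x. x - Jop Wh i j x) * norm x * norm y"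
    and "0 \<le> opnorm_on (Wh j) (\<lambda>x. x - Jop Wh i j x)"
proof -
  note Jp = Jop_props[of Wh j i K, OF sub cl lin bdd K0]
  have sc: "\<And>x c. x \<in> Wh j \<Longrightarrow> (\<lambda>x. x - Jop Wh i j x) (c *\<^sub>R x) = c *\<^sub>R (\<lambda>x. x - Jop Wh i j x) x"
    using Jp(3) by (simp add: scaleR_diff_right)
  have bd: "\<And>x. x \<in> Wh j \<Longrightarrow> norm ((\<lambda>x. x - Jop Wh i j x) x) \<le> (1 + K^2) * norm x"
  proof -
    fix x assume "x \<in> Wh j"
    then have "norm (Jop Wh i j x) \<le> K^2 * norm x" by (rule Jp(4))
    then show "norm ((\<lambda>x. x - Jop Wh i j x) x) \<le> (1 + K^2) * norm x"
      using norm_triangle_ineq4[of x "Jop Wh i j x"] by (simp add: algebra_simps)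
  qed
  have op1: "norm (x - Jop Wh i j x) \<le> opnorm_on (Wh j) (\<lambda>x. x - Jop Wh i j x) * norm x"
    using opnorm_le(1)[OF sub sc bd] x by blast
  have op2: "0 \<le> opnorm_on (Wh j) (\<lambda>x. x - Jop Wh i j x)"
    using opnorm_le(2)[OF sub sc bd] by blast
  have "inner x y - inner (i j x) (i j y) = inner (x - Jop Wh i j x) y"
    using Jp(2)[OF y, of x] by (simp add: inner_diff_left)
  also have "\<bar>\<dots>\<bar> \<le> norm (x - Jop Wh i j x) * norm y" by (rule Cauchy_Schwarz_ineq2)
  also have "\<dots> \<le> opnorm_on (Wh j) (\<lambda>x. x - Jop Wh i j x) * norm x * norm y"
    using op1 by (intro mult_right_mono) auto
  finally show "\<bar>inner x y - inner (i j x) (i j y)\<bar> \<le> opnorm_on (Wh j) (\<lambda>x. x - Jop Wh i j x) * norm x * norm y" .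
  show "0 \<le> opnorm_on (Wh j) (\<lambda>x. x - Jop Wh i j x)" by (rule op2)
qed

theorem mainTheorem9:
  fixes W V :: "int \<Rightarrow> 'w::{real_inner,complete_space} set"
    and d :: "int \<Rightarrow> 'w \<Rightarrow> 'w"
    and Wh Vh :: "real \<Rightarrow> int \<Rightarrow> 'v::{real_inner,complete_space} set"
    and dh :: "real \<Rightarrow> int \<Rightarrow> 'v \<Rightarrow> 'v"
    and ih :: "real \<Rightarrow> int \<Rightarrow> 'v \<Rightarrow> 'w"
    and ph :: "real \<Rightarrow> int \<Rightarrow> 'w \<Rightarrow> 'v"
    and k :: int
  assumes cplx: "closed_hilbert_complex W V d"
    and cplxh: "\<And>h. h > 0 \<Longrightarrow> closed_hilbert_complex (Wh h) (Vh h) (dh h)"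
    and i_lin: "\<And>h j. h > 0 \<Longrightarrow> lin_on (Wh h j) (ih h j)"
    and i_W: "\<And>h j. h > 0 \<Longrightarrow> ih h j ` Wh h j \<subseteq> W j"
    and i_V: "\<And>h j. h > 0 \<Longrightarrow> ih h j ` Vh h j \<subseteq> V j"
    and i_comm: "\<And>h j x. h > 0 \<Longrightarrow> x \<in> Vh h j \<Longrightarrow> ih h (j + 1) (dh h j x) = d j (ih h j x)"
    and i_bdd: "\<exists>K. \<forall>h>0. \<forall>j. \<forall>x\<in>Wh h j. norm (ih h j x) \<le> K * norm x"
    and p_lin: "\<And>h j. h > 0 \<Longrightarrow> lin_on (V j) (ph h j)"
    and p_V: "\<And>h j. h > 0 \<Longrightarrow> ph h j ` V j \<subseteq> Vh h j"
    and p_comm: "\<And>h j x. h > 0 \<Longrightarrow> x \<in> V j \<Longrightarrow> ph h (j + 1) (d j x) = dh h j (ph h j x)"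
    and p_bdd: "\<exists>K. \<forall>h>0. \<forall>j. \<forall>x\<in>V j. vnorm (dh h) j (ph h j x) \<le> K * vnorm d j x"
    and p_i: "\<And>h j x. h > 0 \<Longrightarrow> x \<in> Vh h j \<Longrightarrow> ph h j (ih h j x) = x"
  shows "\<exists>C. \<forall>h>0. \<forall>f fh s u p s' u' p'.
     f \<in> W k \<longrightarrow> fh \<in> Wh h k \<longrightarrow>
     s \<in> Vh h (k - 1) \<longrightarrow> u \<in> Vh h k \<longrightarrow> p \<in> harmonic_sp (Vh h) (dh h) k \<longrightarrow>
     (\<forall>t\<in>Vh h (k - 1). inner s t - inner u (dh h (k - 1) t) = 0) \<longrightarrow>
     (\<forall>v\<in>Vh h k. inner (dh h (k - 1) s) v + inner (dh h k u) (dh h k v) + inner p v = inner fh v) \<longrightarrow>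
     (\<forall>q\<in>harmonic_sp (Vh h) (dh h) k. inner u q = 0) \<longrightarrow>
     s' \<in> Vh h (k - 1) \<longrightarrow> u' \<in> Vh h k \<longrightarrow> p' \<in> harmonic_sp' (Vh h) (dh h) (ih h) k \<longrightarrow>
     (\<forall>t\<in>Vh h (k - 1). inner (Jop (Wh h) (ih h) (k - 1) s') t
                         - inner (Jop (Wh h) (ih h) k u') (dh h (k - 1) t) = 0) \<longrightarrow>
     (\<forall>v\<in>Vh h k. inner (Jop (Wh h) (ih h) k (dh h (k - 1) s')) v
                   + inner (Jop (Wh h) (ih h) (k + 1) (dh h k u')) (dh h k v)
                   + inner (Jop (Wh h) (ih h) k p') v
                 = inner (hadj (Wh h k) (ih h k) f) v) \<longrightarrow>
     (\<forall>q\<in>harmonic_sp' (Vh h) (dh h) (ih h) k. inner (Jop (Wh h) (ih h) k u') q = 0) \<longrightarrow>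
     vnorm (dh h) (k - 1) (s - s') + vnorm (dh h) k (u - u') + norm (p - p')
       \<le> C * (norm (fh - hadj (Wh h k) (ih h k) f)
              + Max ((\<lambda>j. opnorm_on (Wh h j) (\<lambda>x. x - Jop (Wh h) (ih h) j x)) ` {k - 1, k, k + 1})
                * norm f)"
proof -
  obtain Ki where Ki: "\<forall>h>0. \<forall>j. \<forall>x\<in>Wh h j. norm (ih h j x) \<le> Ki * norm x" using i_bdd by blast
  obtain Kp where Kp: "\<forall>h>0. \<forall>j. \<forall>x\<in>V j. vnorm (dh h) j (ph h j x) \<le> Kp * vnorm d j x" using p_bdd by blast
  define K where "K = max 1 (max Ki Kp)"
  have K1: "1 \<le> K" and KiK: "Ki \<le> K" and KpK: "Kp \<le> K" unfolding K_def by auto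
  have K0: "0 \<le> K" using K1 by simp
  have HC: "hilbert_complex W V d" and clR: "\<And>j. closed (d j ` V j)"
    using cplx unfolding closed_hilbert_complex_def by auto
  have Vsub: "\<And>j. subspace (V j)" and dlinC: "\<And>j. lin_on (V j) (d j)"
    and grC: "\<And>j. closed ((\<lambda>x. (x, d j x)) ` V j)"
    using HC unfolding hilbert_complex_def by auto
  obtain c1 where c1: "c1 \<ge> 0" "\<forall>y\<in>V (k - 1). \<exists>z\<in>V (k - 1). d (k - 1) z = 0 \<and> norm (y - z) \<le> c1 * norm (d (k - 1) y)"
    using poincare[OF Vsub dlinC clR grC] by blast
  obtain c2 where c2: "c2 \<ge> 0" "\<forall>y\<in>V k. \<exists>z\<in>V k. d k z = 0 \<and> norm (y - z) \<le> c2 * norm (d k y)"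
    using poincare[OF Vsub dlinC clR grC] by blast
  define c where "c = max c1 c2"
  define G where "G = K^2 * (c + 1)"
  have c0: "0 \<le> c" unfolding c_def using c1 by simp
  have KK: "K \<le> K^2" using K1 by (simp add: power2_eq_square)
  have G1: "1 \<le> G"
  proof -
    have "1 * 1 \<le> K^2 * (c + 1)" using K1 KK c0 by (intro mult_mono) auto
    then show ?thesis unfolding G_def by simp
  qed
  have KG: "K \<le> G"
  proof -
    have "K^2 * 1 \<le> K^2 * (c + 1)" using c0 by (intro mult_left_mono) auto
    then show ?thesis unfolding G_def using KK by simp
  qed
  have vn_ge: "norm x \<le> vnorm D j x" for D j x
    unfolding vnorm_def by (rule real_sqrt_sum_squares_ge1)
  have vn_le: "vnorm D j x \<le> norm x + norm (D j x)" for D j x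
    unfolding vnorm_def by (rule sqrt_sum_squares_le_sum) auto
  show ?thesis
  proof (intro exI[of _ "120 * G^11"] allI impI)
    fix h :: real and f fh s u p s' u' p'
    assume h: "h > 0"
    have HCh: "hilbert_complex (Wh h) (Vh h) (dh h)" and clRh: "\<And>j. closed (dh h j ` Vh h j)"
      using cplxh[OF h] unfolding closed_hilbert_complex_def by auto
    have subV: "\<And>j. subspace (Vh h j)" and subW: "\<And>j. subspace (Wh h j)" and clW: "\<And>j. closed (Wh h j)"
      and VW: "\<And>j. Vh h j \<subseteq> Wh h j" and dlin: "\<And>j. lin_on (Vh h j) (dh h j)"
      and dVh: "\<And>j. dh h j ` Vh h j \<subseteq> Vh h (j + 1)"
      and ddh: "\<And>j x. x \<in> Vh h j \<Longrightarrow> dh h (j + 1) (dh h j x) = 0"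
      using HCh unfolding hilbert_complex_def by auto
    have ilinW: "\<And>j. lin_on (Wh h j) (ih h j)" using i_lin[OF h] .
    have ilinV: "\<And>j. lin_on (Vh h j) (ih h j)" using lin_on_subset[OF ilinW VW] .
    have ibW: "\<And>j x. x \<in> Wh h j \<Longrightarrow> norm (ih h j x) \<le> K * norm x"
    proof -
      fix j x assume "x \<in> Wh h j"
      then have "norm (ih h j x) \<le> Ki * norm x" using Ki h by blast
      also have "\<dots> \<le> K * norm x" using KiK by (intro mult_right_mono) auto
      finally show "norm (ih h j x) \<le> K * norm x" .
    qed
    have ibWG: "\<And>j x. x \<in> Wh h j \<Longrightarrow> norm (ih h j x) \<le> G * norm x"
      using ibW KG by (meson mult_right_mono norm_ge_zero order_trans)
    have pv: "\<And>j x. x \<in> V j \<Longrightarrow> vnorm (dh h) j (ph h j x) \<le> K * vnorm d j x"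
    proof -
      fix j x assume "x \<in> V j"
      then have "vnorm (dh h) j (ph h j x) \<le> Kp * vnorm d j x" using Kp h by blast
      also have "\<dots> \<le> K * vnorm d j x" using KpK by (intro mult_right_mono) (auto simp: vnorm_def)
      finally show "vnorm (dh h) j (ph h j x) \<le> K * vnorm d j x" .
    qed
    have i0: "\<And>j. ih h j 0 = 0" using lin_on_0[OF subW ilinW] .
    have cyc: "\<And>j x. x \<in> Vh h j \<Longrightarrow> dh h j x = 0 \<Longrightarrow> norm x \<le> G * norm (ih h j x)"
    proof -
      fix j x assume x: "x \<in> Vh h j" and dx: "dh h j x = 0"
      have ixV: "ih h j x \<in> V j" using i_V[OF h] x by blast
      have "d j (ih h j x) = 0" using i_comm[OF h x] dx i0 by simp
      then have vi: "vnorm d j (ih h j x) = norm (ih h j x)" unfolding vnorm_def by simp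
      have "norm x \<le> vnorm (dh h) j x" by (rule vn_ge)
      also have "\<dots> = vnorm (dh h) j (ph h j (ih h j x))" using p_i[OF h x] by simp
      also have "\<dots> \<le> K * norm (ih h j x)" using pv[OF ixV] vi by simp
      also have "\<dots> \<le> G * norm (ih h j x)" using KG by (intro mult_right_mono) auto
      finally show "norm x \<le> G * norm (ih h j x)" .
    qed
    have DPg: "\<exists>z\<in>Vh h j. dh h j z = 0 \<and> norm (x - z) \<le> G * norm (dh h j x)"
      if CP: "\<forall>y\<in>V j. \<exists>z\<in>V j. d j z = 0 \<and> norm (y - z) \<le> cc * norm (d j y)" and cc: "0 \<le> cc" "cc \<le> c"
        and x: "x \<in> Vh h j" for j x cc
    proof -
      define y where "y = ih h j x"
      have yV: "y \<in> V j" unfolding y_def using i_V[OF h] x by blast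
      obtain z0 where z0: "z0 \<in> V j" "d j z0 = 0" "norm (y - z0) \<le> cc * norm (d j y)" using CP yV by blast
      have dxV: "dh h j x \<in> Vh h (j + 1)" using dVh x by blast
      have dy: "d j y = ih h (j + 1) (dh h j x)" unfolding y_def using i_comm[OF h x] by simp
      have ndy: "norm (d j y) \<le> K * norm (dh h j x)" unfolding dy using ibW VW dxV by blast
      define z where "z = ph h j z0"
      have zV: "z \<in> Vh h j" unfolding z_def using p_V[OF h] z0(1) by blast
      have dz: "dh h j z = 0" unfolding z_def using p_comm[OF h z0(1)] z0(2) lin_on_0[OF Vsub p_lin[OF h]] by simp
      have xz: "x - z = ph h j (y - z0)"
        unfolding z_def using lin_on_diff[OF Vsub p_lin[OF h] yV z0(1)] p_i[OF h x] unfolding y_def by simp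
      have yzV: "y - z0 \<in> V j" using Vsub yV z0(1) subspace_diff by blast
      have dyz: "d j (y - z0) = d j y" using lin_on_diff[OF Vsub dlinC yV z0(1)] z0(2) by simp
      have "norm (x - z) \<le> vnorm (dh h) j (x - z)" by (rule vn_ge)
      also have "\<dots> \<le> K * vnorm d j (y - z0)" unfolding xz by (rule pv[OF yzV])
      also have "\<dots> \<le> K * (norm (y - z0) + norm (d j y))" using vn_le[of d j "y - z0"] dyz K0
        by (intro mult_left_mono) auto
      also have "\<dots> \<le> K * (cc * (K * norm (dh h j x)) + K * norm (dh h j x))"
        using z0(3) ndy cc K0 mult_left_mono[OF ndy cc(1)] by (intro mult_left_mono) auto
      also have "\<dots> = K^2 * (cc + 1) * norm (dh h j x)" by (simp add: power2_eq_square algebra_simps)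
      also have "\<dots> \<le> G * norm (dh h j x)" unfolding G_def using cc
        by (intro mult_right_mono mult_left_mono) auto
      finally show ?thesis using zV dz by blast
    qed
    assume fW: "f \<in> W k" and fhW: "fh \<in> Wh h k"
      and sV: "s \<in> Vh h (k - 1)" and uV: "u \<in> Vh h k" and pH: "p \<in> harmonic_sp (Vh h) (dh h) k"
      and oe1: "\<forall>t\<in>Vh h (k - 1). inner s t - inner u (dh h (k - 1) t) = 0"
      and oe2: "\<forall>v\<in>Vh h k. inner (dh h (k - 1) s) v + inner (dh h k u) (dh h k v) + inner p v = inner fh v"
      and oe3: "\<forall>q\<in>harmonic_sp (Vh h) (dh h) k. inner u q = 0"
      and s'V: "s' \<in> Vh h (k - 1)" and u'V: "u' \<in> Vh h k" and p'H: "p' \<in> harmonic_sp' (Vh h) (dh h) (ih h) k"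
      and me1: "\<forall>t\<in>Vh h (k - 1). inner (Jop (Wh h) (ih h) (k - 1) s') t
                         - inner (Jop (Wh h) (ih h) k u') (dh h (k - 1) t) = 0"
      and me2: "\<forall>v\<in>Vh h k. inner (Jop (Wh h) (ih h) k (dh h (k - 1) s')) v
                   + inner (Jop (Wh h) (ih h) (k + 1) (dh h k u')) (dh h k v)
                   + inner (Jop (Wh h) (ih h) k p') v
                 = inner (hadj (Wh h k) (ih h k) f) v"
      and me3: "\<forall>q\<in>harmonic_sp' (Vh h) (dh h) (ih h) k. inner (Jop (Wh h) (ih h) k u') q = 0"
    show "vnorm (dh h) (k - 1) (s - s') + vnorm (dh h) k (u - u') + norm (p - p')
       \<le> 120 * G^11 * (norm (fh - hadj (Wh h k) (ih h k) f)
              + Max ((\<lambda>j. opnorm_on (Wh h j) (\<lambda>x. x - Jop (Wh h) (ih h) j x)) ` {k - 1, k, k + 1})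
                * norm f)"
    proof -
      define \<eta> where "\<eta> = Max ((\<lambda>j. opnorm_on (Wh h j) (\<lambda>x. x - Jop (Wh h) (ih h) j x)) ` {k - 1, k, k + 1})"
      define g where "g = hadj (Wh h k) (ih h k) f"
      have bddW: "\<And>j. \<forall>x\<in>Wh h j. norm (ih h j x) \<le> K * norm x" using ibW by blast
      have Jp2: "\<And>j x y. y \<in> Wh h j \<Longrightarrow> inner (Jop (Wh h) (ih h) j x) y = inner (ih h j x) (ih h j y)"
        using Jop_props(2)[of "Wh h" _ "ih h" K, OF subW clW ilinW bddW K0] by blast
      have Jp3: "\<And>j x c. x \<in> Wh h j \<Longrightarrow> Jop (Wh h) (ih h) j (c *\<^sub>R x) = c *\<^sub>R Jop (Wh h) (ih h) j x"
        using Jop_props(3)[of "Wh h" _ "ih h" K, OF subW clW ilinW bddW K0] by blast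
      have Jp4: "\<And>j x. x \<in> Wh h j \<Longrightarrow> norm (Jop (Wh h) (ih h) j x) \<le> K^2 * norm x"
        using Jop_props(4)[of "Wh h" _ "ih h" K, OF subW clW ilinW bddW K0] by blast
      have etaj: "\<bar>inner x y - inner (ih h j x) (ih h j y)\<bar> \<le> opnorm_on (Wh h j) (\<lambda>x. x - Jop (Wh h) (ih h) j x) * norm x * norm y"
        "0 \<le> opnorm_on (Wh h j) (\<lambda>x. x - Jop (Wh h) (ih h) j x)"
        if x: "x \<in> Wh h j" and y: "y \<in> Wh h j" for j x y
        using Jop_eta[of "Wh h" j "ih h" K, OF subW clW ilinW bddW K0 x y] by auto
      have etale: "opnorm_on (Wh h j) (\<lambda>x. x - Jop (Wh h) (ih h) j x) \<le> \<eta>" if "j \<in> {k - 1, k, k + 1}" for j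
        unfolding \<eta>_def using that by (intro Max_ge) auto
      have eta_nn: "0 \<le> \<eta>" using etaj(2)[OF subspace_0[OF subW[of k]] subspace_0[OF subW[of k]]] etale[of k] by simp
      have etaV: "\<bar>inner x y - inner (ih h j x) (ih h j y)\<bar> \<le> \<eta> * norm x * norm y"
        if j: "j \<in> {k - 1, k, k + 1}" and x: "x \<in> Vh h j" and y: "y \<in> Vh h j" for j x y
      proof -
        have xW: "x \<in> Wh h j" and yW: "y \<in> Wh h j" using x y VW by auto
        have "opnorm_on (Wh h j) (\<lambda>x. x - Jop (Wh h) (ih h) j x) * norm x * norm y \<le> \<eta> * norm x * norm y"
          using etale[OF j] by (intro mult_right_mono) auto
        then show ?thesis using etaj(1)[OF xW yW] by linarith
      qed
      have kk: "k - 1 + 1 = k" by simp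
      have dV0: "\<And>x. x \<in> Vh h (k - 1) \<Longrightarrow> dh h (k - 1) x \<in> Vh h k" using dVh[of "k - 1"] by auto
      have dV1: "\<And>x. x \<in> Vh h k \<Longrightarrow> dh h k x \<in> Vh h (k + 1)" using dVh[of k] by auto
      have dd0: "\<And>x. x \<in> Vh h (k - 1) \<Longrightarrow> dh h k (dh h (k - 1) x) = 0" using ddh[of _ "k - 1"] by simp
      have ib0: "\<And>x. x \<in> Vh h (k - 1) \<Longrightarrow> norm (ih h (k - 1) x) \<le> G * norm x" using ibWG VW by blast
      have ib1: "\<And>x. x \<in> Vh h k \<Longrightarrow> norm (ih h k x) \<le> G * norm x" using ibWG VW by blast
      have cyc0: "\<And>x. x \<in> Vh h (k - 1) \<Longrightarrow> dh h (k - 1) x = 0 \<Longrightarrow> norm x \<le> G * norm (ih h (k - 1) x)" using cyc by blast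
      have cyc1: "\<And>x. x \<in> Vh h k \<Longrightarrow> dh h k x = 0 \<Longrightarrow> norm x \<le> G * norm (ih h k x)" using cyc by blast
      have cyc2: "\<And>x. x \<in> Vh h k \<Longrightarrow> norm (dh h k x) \<le> G * norm (ih h (k + 1) (dh h k x))"
        using cyc dV1 ddh by blast
      have DP0: "\<And>x. x \<in> Vh h (k - 1) \<Longrightarrow> \<exists>z\<in>Vh h (k - 1). dh h (k - 1) z = 0 \<and> norm (x - z) \<le> G * norm (dh h (k - 1) x)"
        using DPg[OF c1(2) c1(1)] unfolding c_def by auto
      have DP1: "\<And>x. x \<in> Vh h k \<Longrightarrow> \<exists>z\<in>Vh h k. dh h k z = 0 \<and> norm (x - z) \<le> G * norm (dh h k x)"
        using DPg[OF c2(2) c2(1)] unfolding c_def by auto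
      define B where "B = dh h (k - 1) ` Vh h (k - 1)"
      have subB: "subspace B" unfolding B_def by (rule lin_image_subspace[OF subV[of "k - 1"] dlin[of "k - 1"]])
      have clB: "closed B" unfolding B_def by (rule clRh)
      have BV: "B \<subseteq> Vh h k" unfolding B_def using dV0 by blast
      have proj: "\<And>z. z \<in> Vh h k \<Longrightarrow> \<exists>\<beta>\<in>B. \<forall>b\<in>B. inner (z - \<beta>) b = 0"
        using proj_exists[OF subB clB] by blast
      have linB: "lin_on B (ih h k)" using lin_on_subset[OF ilinV[of k] BV] .
      have contB: "continuous_on B (ih h k)"
        using lin_bdd_cont[OF subW[of k] ilinW[of k] bddW[of k]] BV VW[of k] continuous_on_subset by blast
      have coB: "\<And>x. x \<in> B \<Longrightarrow> norm x \<le> G * norm (ih h k x)"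
      proof -
        fix x assume "x \<in> B"
        then obtain t where t: "t \<in> Vh h (k - 1)" "x = dh h (k - 1) t" unfolding B_def by blast
        show "norm x \<le> G * norm (ih h k x)" using cyc1[OF dV0[OF t(1)] dd0[OF t(1)]] t(2) by simp
      qed
      have clIB: "closed (ih h k ` B)" by (rule closed_image_coercive[OF clB subB linB contB coB])
      have subIB: "subspace (ih h k ` B)" by (rule lin_image_subspace[OF subB linB])
      have Jproj: "\<And>z. z \<in> Vh h k \<Longrightarrow> \<exists>\<beta>\<in>B. \<forall>b\<in>B. inner (ih h k z - ih h k \<beta>) (ih h k b) = 0"
      proof -
        fix z
        obtain y where y: "y \<in> ih h k ` B" "\<forall>t\<in>ih h k ` B. inner (ih h k z - y) t = 0"
          using proj_exists[OF subIB clIB] by blast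
        then obtain \<beta> where "\<beta> \<in> B" "y = ih h k \<beta>" by blast
        then show "\<exists>\<beta>\<in>B. \<forall>b\<in>B. inner (ih h k z - ih h k \<beta>) (ih h k b) = 0" using y(2) by blast
      qed
      have pS: "p \<in> Vh h k" "dh h k p = 0" "\<And>b. b \<in> Vh h (k - 1) \<Longrightarrow> inner p (dh h (k - 1) b) = 0"
        using pH unfolding harmonic_sp_def by auto
      have p'S: "p' \<in> Vh h k" "dh h k p' = 0" "\<And>b. b \<in> Vh h (k - 1) \<Longrightarrow> inner (ih h k p') (ih h k (dh h (k - 1) b)) = 0"
        using p'H unfolding harmonic_sp'_def by auto
      have oe3': "\<And>q. q \<in> Vh h k \<Longrightarrow> dh h k q = 0 \<Longrightarrow> (\<forall>b\<in>Vh h (k - 1). inner q (dh h (k - 1) b) = 0) \<Longrightarrow> inner u q = 0"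
        using oe3 unfolding harmonic_sp_def by auto
      have VWk: "\<And>x. x \<in> Vh h k \<Longrightarrow> x \<in> Wh h k" and VWk0: "\<And>x. x \<in> Vh h (k - 1) \<Longrightarrow> x \<in> Wh h (k - 1)"
        and VWk1: "\<And>x. x \<in> Vh h (k + 1) \<Longrightarrow> x \<in> Wh h (k + 1)" using VW by auto
      have me1': "\<And>t. t \<in> Vh h (k - 1) \<Longrightarrow> inner (ih h (k - 1) s') (ih h (k - 1) t) - inner (ih h k u') (ih h k (dh h (k - 1) t)) = 0"
        using me1 Jp2[OF VWk0] Jp2[OF VWk[OF dV0]] by metis
      have gf: "\<And>v. v \<in> Vh h k \<Longrightarrow> inner g v = inner f (ih h k v)"
        unfolding g_def using hadj_props(2)[OF subW[of k] clW[of k] ilinW[of k] bddW[of k]] VWk by blast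
      have me2': "\<And>v. v \<in> Vh h k \<Longrightarrow> inner (ih h k (dh h (k - 1) s')) (ih h k v) + inner (ih h (k + 1) (dh h k u')) (ih h (k + 1) (dh h k v))
             + inner (ih h k p') (ih h k v) = inner f (ih h k v)"
      proof -
        fix v assume v: "v \<in> Vh h k"
        have "inner (Jop (Wh h) (ih h) k (dh h (k - 1) s')) v
                   + inner (Jop (Wh h) (ih h) (k + 1) (dh h k u')) (dh h k v)
                   + inner (Jop (Wh h) (ih h) k p') v
                 = inner (hadj (Wh h k) (ih h k) f) v" using me2 v by blast
        then show "inner (ih h k (dh h (k - 1) s')) (ih h k v) + inner (ih h (k + 1) (dh h k u')) (ih h (k + 1) (dh h k v))
             + inner (ih h k p') (ih h k v) = inner f (ih h k v)"
          using Jp2[OF VWk[OF v]] Jp2[OF VWk1[OF dV1[OF v]]] gf[OF v] unfolding g_def by metis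
      qed
      have me3': "\<And>q. q \<in> Vh h k \<Longrightarrow> dh h k q = 0 \<Longrightarrow> (\<forall>b\<in>Vh h (k - 1). inner (ih h k q) (ih h k (dh h (k - 1) b)) = 0)
          \<Longrightarrow> inner (ih h k u') (ih h k q) = 0"
      proof -
        fix q assume q: "q \<in> Vh h k" "dh h k q = 0" "\<forall>b\<in>Vh h (k - 1). inner (ih h k q) (ih h k (dh h (k - 1) b)) = 0"
        then have "q \<in> harmonic_sp' (Vh h) (dh h) (ih h) k" unfolding harmonic_sp'_def by auto
        then have "inner (Jop (Wh h) (ih h) k u') q = 0" using me3 by blast
        then show "inner (ih h k u') (ih h k q) = 0" using Jp2[OF VWk[OF q(1)]] by simp
      qed
      note mods = core_mod[OF subV[of "k - 1"] subV[of k] subV[of "k + 1"] dV0 dV1 dd0 dlin[of "k - 1"] dlin[of k] ilinV[of "k - 1"] ilinV[of k] ilinV[of "k + 1"] G1 ib0 ib1 cyc0 cyc1 cyc2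
          DP0 DP1 Jproj[unfolded B_def] s'V u'V p'S me1' me2' me3']
      have etas: "\<And>x y. x \<in> Vh h (k - 1) \<Longrightarrow> y \<in> Vh h (k - 1) \<Longrightarrow> \<bar>inner x y - inner (ih h (k - 1) x) (ih h (k - 1) y)\<bar> \<le> \<eta> * norm x * norm y"
        "\<And>x y. x \<in> Vh h k \<Longrightarrow> y \<in> Vh h k \<Longrightarrow> \<bar>inner x y - inner (ih h k x) (ih h k y)\<bar> \<le> \<eta> * norm x * norm y"
        "\<And>x y. x \<in> Vh h (k + 1) \<Longrightarrow> y \<in> Vh h (k + 1) \<Longrightarrow> \<bar>inner x y - inner (ih h (k + 1) x) (ih h (k + 1) y)\<bar> \<le> \<eta> * norm x * norm y"
        using etaV by auto
      have "sqrt ((norm (s - s'))^2 + (norm (dh h (k - 1) (s - s')))^2) + sqrt ((norm (u - u'))^2 + (norm (dh h k (u - u')))^2)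
         + norm (p - p') \<le> 120 * G^11 * (norm (fh - g) + \<eta> * norm f)"
        by (rule core_diff[OF subV[of "k - 1"] subV[of k] subV[of "k + 1"] dV0 dV1 dd0 dlin[of "k - 1"] dlin[of k] ilinV[of "k - 1"] ilinV[of k] ilinV[of "k + 1"] G1 ib1 cyc1 DP0 DP1
            proj[unfolded B_def] Jproj[unfolded B_def] etas eta_nn sV uV pS oe1[rule_format] oe2[rule_format] oe3'
            s'V u'V p'S me1' me2' me3' gf mods])
      then show ?thesis unfolding vnorm_def \<eta>_def g_def .
    qed
  qed
qed

end
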